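(* Assume: every admissible noise $e=y_\delta-y$ (with $\|e\|\le\delta$) satisfies MC$_2$ with a common constant $C_2$; $x^\dagger\neq0$ satisfies $x^\dagger=(A^*A)^\mu\omega$, $\|\omega\|\le C_s$, with $0<\mu\le1$. Let $\alpha^*$ be a minimizer over $(0,\alpha_{\max})$ of the simple-L ratio functional $\psi_{SLR}$, and put $\tilde\mu=\min\{\mu,\tfrac12\}$. Then there exist $C>0$ and $\delta_0>0$, independent of $\delta$ and $e$, such that for all $0<\delta\le\delta_0$ $$\|x_{\alpha^*}^\delta-x^\dagger\|\le C\,\delta^{\frac{2\tilde\mu}{2\tilde\mu+1}\,2\tilde\mu};$$ and if in addition there is $D>0$ with $\sum_{\lambda_i\le\alpha}|\langle x^\dagger,u_i\rangle|^2\le D\sum_{\lambda_i\ge\alpha}\frac{\alpha}{\lambda_i}|\langle x^\dagger,u_i\rangle|^2$ for all $\alpha\in(0,\alpha_{\max})$, then for all $0<\delta\le\delta_0$ $$\|x_{\alpha^*}^\delta-x^\dagger\|\le C\,\delta^{\frac{2\tilde\mu}{2\tilde\mu+1}}.$$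
   Context: Let $X,Y$ be real Hilbert spaces and $A:X\to Y$ a compact linear operator with singular system $(\sigma_i,u_i,v_i)_i$, $\sigma_i>0$; put $\lambda_i=\sigma_i^2$. Let $x^\dagger\in N(A)^\perp$ be the minimum-norm solution, $y=Ax^\dagger$, $y_\delta=y+e$ with $\|e\|\le\delta$. Tikhonov regularization: $x_\alpha^\delta=(A^*A+\alpha I)^{-1}A^*y_\delta$, $\alpha\in(0,\alpha_{\max})$. Simple-L functional $\psi_{SL}(\alpha):=\big(\sum_i\frac{\alpha\lambda_i}{(\lambda_i+\alpha)^3}|\langle y_\delta,v_i\rangle|^2\big)^{1/2}=\big(-\tfrac12\alpha\tfrac{d}{d\alpha}\|x_\alpha^\delta\|^2\big)^{1/2}$; simple-L ratio functional $\psi_{SLR}(\alpha):=\psi_{SL}(\alpha)/\|x_\alpha^\delta\|$. Condition MC$_2$ with constant $C_2$: for all $0<\alpha\le\alpha_{\max}$, $\sum_{\lambda_i\ge\alpha}\frac{\alpha}{\lambda_i}|\langle e,v_i\rangle|^2\le C_2\sum_{\lambda_i\le\alpha}\frac{\lambda_i}{\alpha}|\langle e,v_i\rangle|^2$. *)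

theory Defs
  imports "HOL-Analysis.Analysis"
begin

definition compact_op :: "('a::real_normed_vector \<Rightarrow> 'b::real_normed_vector) \<Rightarrow> bool" where
  "compact_op A \<longleftrightarrow> bounded_linear A \<and> (\<forall>S. bounded S \<longrightarrow> compact (closure (A ` S)))"

definition orthonormal_on :: "nat set \<Rightarrow> (nat \<Rightarrow> 'a::real_inner) \<Rightarrow> bool" where
  "orthonormal_on I u \<longleftrightarrow> (\<forall>i\<in>I. \<forall>j\<in>I. inner (u i) (u j) = (if i = j then 1 else 0))"

definition singular_system ::
  "('a::real_inner \<Rightarrow> 'b::real_inner) \<Rightarrow> nat set \<Rightarrow> (nat \<Rightarrow> real) \<Rightarrow> (nat \<Rightarrow> 'a) \<Rightarrow> (nat \<Rightarrow> 'b) \<Rightarrow> bool" where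
  "singular_system A I \<sigma> u v \<longleftrightarrow>
     (\<forall>i\<in>I. \<sigma> i > 0) \<and> orthonormal_on I u \<and> orthonormal_on I v \<and>
     (\<forall>x. ((\<lambda>i. (\<sigma> i * inner x (u i)) *\<^sub>R v i) has_sum A x) I)"

text \<open>Tikhonov regularized solution x = (A*A + alpha I)^{-1} A* y, characterised by the
  (weak form of the) normal equation <A x - y, A z> + alpha <x, z> = 0 for all z.\<close>
definition tikh :: "('a::real_inner \<Rightarrow> 'b::real_inner) \<Rightarrow> real \<Rightarrow> 'b \<Rightarrow> 'a" where
  "tikh A \<alpha> y = (THE x. \<forall>z. inner (A x - y) (A z) + \<alpha> * inner x z = 0)"

definition psiSL :: "nat set \<Rightarrow> (nat \<Rightarrow> real) \<Rightarrow> (nat \<Rightarrow> 'b::real_inner) \<Rightarrow> 'b \<Rightarrow> real \<Rightarrow> real" where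
  "psiSL I \<sigma> v y \<alpha> =
     sqrt (\<Sum>\<^sub>\<infinity>i\<in>I. \<alpha> * (\<sigma> i)\<^sup>2 / ((\<sigma> i)\<^sup>2 + \<alpha>) ^ 3 * (inner y (v i))\<^sup>2)"

definition psiSLR ::
  "('a::real_inner \<Rightarrow> 'b::real_inner) \<Rightarrow> nat set \<Rightarrow> (nat \<Rightarrow> real) \<Rightarrow> (nat \<Rightarrow> 'b) \<Rightarrow> 'b \<Rightarrow> real \<Rightarrow> real" where
  "psiSLR A I \<sigma> v y \<alpha> = psiSL I \<sigma> v y \<alpha> / norm (tikh A \<alpha> y)"

definition MC2 :: "real \<Rightarrow> nat set \<Rightarrow> (nat \<Rightarrow> real) \<Rightarrow> (nat \<Rightarrow> 'b::real_inner) \<Rightarrow> real \<Rightarrow> 'b \<Rightarrow> bool" where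
  "MC2 C2 I \<sigma> v \<alpha>max e \<longleftrightarrow>
     (\<forall>\<alpha>. 0 < \<alpha> \<and> \<alpha> \<le> \<alpha>max \<longrightarrow>
        (\<Sum>\<^sub>\<infinity>i\<in>{i\<in>I. (\<sigma> i)\<^sup>2 \<ge> \<alpha>}. \<alpha> / (\<sigma> i)\<^sup>2 * (inner e (v i))\<^sup>2)
        \<le> C2 * (\<Sum>\<^sub>\<infinity>i\<in>{i\<in>I. (\<sigma> i)\<^sup>2 \<le> \<alpha>}. (\<sigma> i)\<^sup>2 / \<alpha> * (inner e (v i))\<^sup>2))"

text \<open>(A*A)^mu w via the spectral decomposition of A*A (eigenvalues lambda_i = sigma_i^2,
  eigenvectors u_i; the null space part vanishes since mu > 0).\<close>
definition AstarA_pow ::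
  "nat set \<Rightarrow> (nat \<Rightarrow> real) \<Rightarrow> (nat \<Rightarrow> 'a::{real_inner,complete_space}) \<Rightarrow> real \<Rightarrow> 'a \<Rightarrow> 'a" where
  "AstarA_pow I \<sigma> u \<mu> w = (\<Sum>\<^sub>\<infinity>i\<in>I. (((\<sigma> i)\<^sup>2) powr \<mu> * inner w (u i)) *\<^sub>R u i)"

end

theory Submission
  imports Defs
begin

lemma mult_if01: "(a::real) * (if P then 1 else 0) = (if P then a else 0)" by simp

lemma orth_sum_norm2:
  fixes u :: "nat \<Rightarrow> 'a::real_inner"
  assumes on: "orthonormal_on I u" and G: "finite G" "G \<subseteq> I"
  shows "(norm (\<Sum>i\<in>G. c i *\<^sub>R u i))\<^sup>2 = (\<Sum>i\<in>G. (c i)\<^sup>2)"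
proof -
  have "(norm (\<Sum>i\<in>G. c i *\<^sub>R u i))\<^sup>2 = inner (\<Sum>i\<in>G. c i *\<^sub>R u i) (\<Sum>j\<in>G. c j *\<^sub>R u j)"
    by (simp add: power2_norm_eq_inner)
  also have "\<dots> = (\<Sum>j\<in>G. c j * (\<Sum>i\<in>G. c i * inner (u i) (u j)))"
    by (simp add: inner_sum_left inner_sum_right)
  also have "\<dots> = (\<Sum>j\<in>G. c j * (\<Sum>i\<in>G. if i = j then c i else 0))"
    using on G unfolding orthonormal_on_def by (simp add: subset_iff mult_if01)
  also have "\<dots> = (\<Sum>i\<in>G. (c i)\<^sup>2)"
    using G by (simp add: power2_eq_square)
  finally show ?thesis .
qed

lemma orth_inner_sum:
  fixes u :: "nat \<Rightarrow> 'a::real_inner"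
  assumes on: "orthonormal_on I u" and G: "finite G" "G \<subseteq> I" and j: "j \<in> I"
  shows "inner (\<Sum>i\<in>G. c i *\<^sub>R u i) (u j) = (if j \<in> G then c j else 0)"
proof -
  have "inner (\<Sum>i\<in>G. c i *\<^sub>R u i) (u j) = (\<Sum>i\<in>G. c i * inner (u i) (u j))"
    by (simp add: inner_sum_left)
  also have "\<dots> = (\<Sum>i\<in>G. if i = j then c i else 0)"
    using on G j unfolding orthonormal_on_def by (intro sum.cong refl) auto
  also have "\<dots> = (if j \<in> G then c j else 0)"
    using G by simp
  finally show ?thesis .
qed

lemma bessel_finite:
  fixes u :: "nat \<Rightarrow> 'a::real_inner"
  assumes on: "orthonormal_on I u" and G: "finite G" "G \<subseteq> I"
  shows "(\<Sum>i\<in>G. (inner y (u i))\<^sup>2) \<le> (norm y)\<^sup>2"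
proof -
  define p where "p = (\<Sum>i\<in>G. inner y (u i) *\<^sub>R u i)"
  have yp: "inner y p = (\<Sum>i\<in>G. (inner y (u i))\<^sup>2)"
    by (simp add: p_def inner_sum_right power2_eq_square)
  have pp: "inner p p = (\<Sum>i\<in>G. (inner y (u i))\<^sup>2)"
    using orth_sum_norm2[OF on G, of "\<lambda>i. inner y (u i)"] by (simp add: p_def power2_norm_eq_inner)
  have "0 \<le> inner (y - p) (y - p)" by simp
  also have "\<dots> = inner y y - 2 * inner y p + inner p p"
    by (simp add: inner_diff_left inner_diff_right inner_commute)
  finally show ?thesis using yp pp by (simp add: power2_norm_eq_inner)
qed

lemma nonneg_summable_bound:
  fixes g :: "nat \<Rightarrow> real"
  assumes "\<And>i. i \<in> I \<Longrightarrow> g i \<ge> 0" "\<And>G. finite G \<Longrightarrow> G \<subseteq> I \<Longrightarrow> sum g G \<le> B"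
  shows "g summable_on I" "infsum g I \<le> B"
proof -
  show s: "g summable_on I"
    by (rule nonneg_bdd_above_summable_on) (use assms in \<open>auto simp: bdd_above_def\<close>)
  show "infsum g I \<le> B"
    using assms by (subst nonneg_bdd_above_infsum) (auto simp: bdd_above_def intro!: cSUP_least)
qed

lemma bessel:
  fixes u :: "nat \<Rightarrow> 'a::real_inner"
  assumes on: "orthonormal_on I u"
  shows "(\<lambda>i. (inner y (u i))\<^sup>2) summable_on I" "(\<Sum>\<^sub>\<infinity>i\<in>I. (inner y (u i))\<^sup>2) \<le> (norm y)\<^sup>2"
  using nonneg_summable_bound[of I "\<lambda>i. (inner y (u i))\<^sup>2" "(norm y)\<^sup>2"] bessel_finite[OF on] by auto

lemma summable_sq_criterion:
  fixes f :: "nat \<Rightarrow> 'b::{real_normed_vector,complete_space}" and g :: "nat \<Rightarrow> real"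
  assumes g: "g summable_on A" "\<And>i. i \<in> A \<Longrightarrow> g i \<ge> 0"
  and bd: "\<And>G. finite G \<Longrightarrow> G \<subseteq> A \<Longrightarrow> (norm (sum f G))\<^sup>2 \<le> sum g G"
  shows "f summable_on A"
proof -
  from g obtain L where lim: \<open>(sum g \<longlongrightarrow> L) (finite_subsets_at_top A)\<close>
    unfolding has_sum_def summable_on_def by blast
  have \<open>\<exists>P. eventually P (finite_subsets_at_top A) \<and>
              (\<forall>F F'. P F \<and> P F' \<longrightarrow> dist (sum f F) (sum f F') < e)\<close> if \<open>e>0\<close> for e
  proof -
    define d P where \<open>d = e^2/16\<close> and \<open>P F \<longleftrightarrow> finite F \<and> F \<subseteq> A \<and> dist (sum g F) L < d\<close> for F
    have \<open>d > 0\<close>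
      using that by (simp add: d_def)
    have ev_P: \<open>eventually P (finite_subsets_at_top A)\<close>
      using lim
      by (auto simp add: P_def[abs_def] \<open>0 < d\<close> eventually_conj_iff eventually_finite_subsets_at_top_weakI tendsto_iff)
    moreover have \<open>dist (sum f F1) (sum f F2) < e\<close> if \<open>P F1\<close> and \<open>P F2\<close> for F1 F2
    proof -
      from ev_P
      obtain F' where \<open>finite F'\<close> and \<open>F' \<subseteq> A\<close> and P_sup_F': \<open>finite F \<and> F \<supseteq> F' \<and> F \<subseteq> A \<Longrightarrow> P F\<close> for F
        by atomize_elim (simp add: eventually_finite_subsets_at_top)
      define F where \<open>F = F' \<union> F1 \<union> F2\<close>
      have \<open>finite F\<close> and \<open>F \<subseteq> A\<close>
        using F_def P_def[abs_def] that \<open>finite F'\<close> \<open>F' \<subseteq> A\<close> by auto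
      have dist_F: \<open>dist (sum g F) L < d\<close>
        by (metis F_def \<open>F \<subseteq> A\<close> P_def P_sup_F' \<open>finite F\<close> le_supE order_refl)
      have dist_F_subset: \<open>dist (sum f F) (sum f F') < e/2\<close> if F': \<open>F' \<subseteq> F\<close> \<open>P F'\<close> for F'
      proof -
        have \<open>dist (sum f F) (sum f F') = norm (sum f (F-F'))\<close>
          unfolding dist_norm using \<open>finite F\<close> F' by (subst sum_diff) auto
        also have "\<dots> \<le> sqrt (sum g (F - F'))"
          using bd[of "F - F'"] \<open>finite F\<close> \<open>F \<subseteq> A\<close> by (intro real_le_rsqrt) auto
        also have \<open>sum g (F - F') = dist (sum g F) (sum g F')\<close>
        proof -
          have "sum g F' \<le> sum g F"
            using \<open>finite F\<close> F' g(2) \<open>F \<subseteq> A\<close> by (intro sum_mono2) auto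
          thus ?thesis
          unfolding dist_norm using \<open>finite F\<close> F' g(2) \<open>F \<subseteq> A\<close>
          by (subst sum_diff) auto
        qed
        also have \<open>sqrt \<dots> < sqrt (2 * d)\<close>
          using dist_F F' unfolding P_def dist_norm real_norm_def
          by (intro real_sqrt_less_mono) linarith
        also have "sqrt (2*d) < e/2"
        proof -
          have "2 * d < (e/2)^2" using \<open>e > 0\<close> by (simp add: d_def power2_eq_square)
          thus ?thesis using \<open>e > 0\<close> by (metis less_eq_real_def real_less_lsqrt zero_le_divide_iff zero_le_numeral) 
        qed
        finally show ?thesis by simp
      qed
      have \<open>dist (sum f F1) (sum f F2) \<le> dist (sum f F) (sum f F1) + dist (sum f F) (sum f F2)\<close>
        by (rule dist_triangle3)
      also have \<open>\<dots> < e/2 + e/2\<close>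
        by (intro add_strict_mono dist_F_subset that) (auto simp: F_def)
      finally show \<open>dist (sum f F1) (sum f F2) < e\<close> by simp
    qed
    ultimately show ?thesis
      by blast
  qed
  then have \<open>cauchy_filter (filtermap (sum f) (finite_subsets_at_top A))\<close>
    by (simp add: cauchy_filter_metric_filtermap)
  moreover have "complete (UNIV::'b set)"
    by (meson Cauchy_convergent UNIV_I complete_def convergent_def)
  ultimately obtain L' where \<open>(sum f \<longlongrightarrow> L') (finite_subsets_at_top A)\<close>
    using complete_uniform[where S=UNIV] by (force simp add: filterlim_def)
  then show ?thesis
    using summable_on_def has_sum_def by blast
qed

lemma has_sum_single_idx:
  assumes "j \<in> I"
  shows "((\<lambda>i. if i = j then a else 0) has_sum (a::'b::{comm_monoid_add,topological_space})) I"
proof -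
  have "((\<lambda>i. if i = j then a else 0) has_sum a) {j}"
    by (rule has_sum_finiteI) auto
  thus ?thesis
    by (subst has_sum_cong_neutral[where S=I and T="{j}" and g="\<lambda>i. if i = j then a else 0"]) (use assms in auto)
qed

lemma has_sum_diff':
  fixes f g :: "'a \<Rightarrow> 'b::topological_ab_group_add"
  assumes "(f has_sum a) A" "(g has_sum b) A"
  shows "((\<lambda>x. f x - g x) has_sum (a - b)) A"
proof -
  have "((\<lambda>x. - g x) has_sum (- b)) A" using assms(2) by (simp add: has_sum_uminus)
  from has_sum_add[OF assms(1) this] show ?thesis by simp
qed

context
  fixes I :: "nat set" and u :: "nat \<Rightarrow> 'a::{real_inner,complete_space}"
  assumes on: "orthonormal_on I u"
begin

lemma os_summable:
  assumes c: "(\<lambda>i. (c i)\<^sup>2) summable_on I"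
  shows "(\<lambda>i. c i *\<^sub>R u i) summable_on I"
proof (rule summable_sq_criterion[OF c])
  fix G assume "finite G" "G \<subseteq> I"
  thus "(norm (\<Sum>i\<in>G. c i *\<^sub>R u i))\<^sup>2 \<le> (\<Sum>i\<in>G. (c i)\<^sup>2)"
    using orth_sum_norm2[OF on] by simp
qed simp

lemma os_inner_has_sum:
  assumes c: "(\<lambda>i. (c i)\<^sup>2) summable_on I"
  shows "((\<lambda>i. c i * inner (u i) z) has_sum inner (\<Sum>\<^sub>\<infinity>i\<in>I. c i *\<^sub>R u i) z) I"
proof -
  have "((\<lambda>i. c i *\<^sub>R u i) has_sum (\<Sum>\<^sub>\<infinity>i\<in>I. c i *\<^sub>R u i)) I"
    using os_summable[OF c] by simp
  from has_sum_bounded_linear[OF bounded_linear_inner_left this, of z] show ?thesis by simp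
qed

lemma os_coeff:
  assumes c: "(\<lambda>i. (c i)\<^sup>2) summable_on I" and j: "j \<in> I"
  shows "inner (\<Sum>\<^sub>\<infinity>i\<in>I. c i *\<^sub>R u i) (u j) = c j"
proof -
  have "((\<lambda>i. c i * inner (u i) (u j)) has_sum inner (\<Sum>\<^sub>\<infinity>i\<in>I. c i *\<^sub>R u i) (u j)) I"
    by (rule os_inner_has_sum[OF c])
  moreover have "((\<lambda>i. c i * inner (u i) (u j)) has_sum c j) I"
  proof -
    have "((\<lambda>i. if i = j then c j else 0) has_sum c j) I" by (rule has_sum_single_idx[OF j])
    moreover have "\<And>i. i \<in> I \<Longrightarrow> c i * inner (u i) (u j) = (if i = j then c j else 0)"
      using on j by (auto simp: orthonormal_on_def)
    ultimately show ?thesis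
      by (subst has_sum_cong) auto
  qed
  ultimately show ?thesis using has_sum_unique by blast
qed

lemma os_norm2:
  assumes c: "(\<lambda>i. (c i)\<^sup>2) summable_on I"
  shows "(norm (\<Sum>\<^sub>\<infinity>i\<in>I. c i *\<^sub>R u i))\<^sup>2 = (\<Sum>\<^sub>\<infinity>i\<in>I. (c i)\<^sup>2)"
proof -
  define s where "s = (\<Sum>\<^sub>\<infinity>i\<in>I. c i *\<^sub>R u i)"
  have "((\<lambda>i. c i * inner (u i) s) has_sum inner s s) I"
    unfolding s_def by (rule os_inner_has_sum[OF c])
  moreover have "\<And>i. i \<in> I \<Longrightarrow> c i * inner (u i) s = (c i)\<^sup>2"
    using os_coeff[OF c] by (simp add: s_def inner_commute power2_eq_square)
  ultimately have "((\<lambda>i. (c i)\<^sup>2) has_sum inner s s) I"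
    by (subst (asm) has_sum_cong) auto
  thus ?thesis by (simp add: s_def power2_norm_eq_inner infsumI)
qed

lemma os_diff:
  assumes c: "(\<lambda>i. (c i)\<^sup>2) summable_on I" and d: "(\<lambda>i. (d i)\<^sup>2) summable_on I"
  shows "(\<Sum>\<^sub>\<infinity>i\<in>I. c i *\<^sub>R u i) - (\<Sum>\<^sub>\<infinity>i\<in>I. d i *\<^sub>R u i) = (\<Sum>\<^sub>\<infinity>i\<in>I. (c i - d i) *\<^sub>R u i)"
proof -
  have "((\<lambda>i. c i *\<^sub>R u i - d i *\<^sub>R u i) has_sum (\<Sum>\<^sub>\<infinity>i\<in>I. c i *\<^sub>R u i) - (\<Sum>\<^sub>\<infinity>i\<in>I. d i *\<^sub>R u i)) I"
    by (intro has_sum_diff' has_sum_infsum os_summable c d)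
  thus ?thesis by (simp add: scaleR_diff_left infsumI)
qed

end

locale sv =
  fixes A :: "'a::{real_inner,complete_space} \<Rightarrow> 'b::{real_inner,complete_space}"
    and I :: "nat set" and \<sigma> :: "nat \<Rightarrow> real" and u :: "nat \<Rightarrow> 'a" and v :: "nat \<Rightarrow> 'b"
  assumes cpt: "compact_op A" and sys: "singular_system A I \<sigma> u v"
begin

lemma bl: "bounded_linear A" using cpt by (simp add: compact_op_def)

lemma onu: "orthonormal_on I u" and onv: "orthonormal_on I v" and sig_pos: "\<And>i. i \<in> I \<Longrightarrow> \<sigma> i > 0"
  and Ahs: "\<And>x. ((\<lambda>i. (\<sigma> i * inner x (u i)) *\<^sub>R v i) has_sum A x) I"
  using sys by (auto simp: singular_system_def)

lemma A_inner_v: "j \<in> I \<Longrightarrow> inner (A x) (v j) = \<sigma> j * inner x (u j)"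
proof -
  assume j: "j \<in> I"
  have "((\<lambda>i. inner ((\<sigma> i * inner x (u i)) *\<^sub>R v i) (v j)) has_sum inner (A x) (v j)) I"
    by (rule has_sum_bounded_linear[OF bounded_linear_inner_left Ahs])
  moreover have "((\<lambda>i. if i = j then \<sigma> j * inner x (u j) else 0) has_sum \<sigma> j * inner x (u j)) I"
    by (rule has_sum_single_idx[OF j])
  moreover have "\<And>i. i \<in> I \<Longrightarrow> inner ((\<sigma> i * inner x (u i)) *\<^sub>R v i) (v j) = (if i = j then \<sigma> j * inner x (u j) else 0)"
    using onv j by (auto simp: orthonormal_on_def)
  ultimately have "((\<lambda>i. if i = j then \<sigma> j * inner x (u j) else 0) has_sum inner (A x) (v j)) I"
    by (subst (asm) has_sum_cong) auto
  thus ?thesis using \<open>((\<lambda>i. if i = j then \<sigma> j * inner x (u j) else 0) has_sum \<sigma> j * inner x (u j)) I\<close>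
    using has_sum_unique by blast
qed

lemma inner_A_has_sum: "((\<lambda>i. \<sigma> i * inner z (u i) * inner y (v i)) has_sum inner y (A z)) I"
proof -
  have "((\<lambda>i. inner y ((\<sigma> i * inner z (u i)) *\<^sub>R v i)) has_sum inner y (A z)) I"
    by (rule has_sum_bounded_linear[OF bounded_linear_inner_right Ahs])
  thus ?thesis by simp
qed

lemma A_u: "i \<in> I \<Longrightarrow> A (u i) = \<sigma> i *\<^sub>R v i"
proof -
  assume i: "i \<in> I"
  have "((\<lambda>j. if j = i then \<sigma> i *\<^sub>R v i else 0) has_sum \<sigma> i *\<^sub>R v i) I"
    by (rule has_sum_single_idx[OF i])
  moreover have "\<And>j. j \<in> I \<Longrightarrow> (\<sigma> j * inner (u i) (u j)) *\<^sub>R v j = (if j = i then \<sigma> i *\<^sub>R v i else 0)"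
    using onu i by (auto simp: orthonormal_on_def)
  ultimately have "((\<lambda>j. (\<sigma> j * inner (u i) (u j)) *\<^sub>R v j) has_sum \<sigma> i *\<^sub>R v i) I"
    by (subst has_sum_cong) auto
  thus ?thesis using Ahs[of "u i"] has_sum_unique by blast
qed

lemma sig_bound: "\<exists>K>0. \<forall>i\<in>I. \<sigma> i \<le> K"
proof -
  obtain K where K: "K > 0" "\<And>x. norm (A x) \<le> norm x * K"
    using bounded_linear.pos_bounded[OF bl] by blast
  have "\<sigma> i \<le> K" if i: "i \<in> I" for i
  proof -
    have nu: "norm (u i) = 1" and nv: "norm (v i) = 1"
      using onu onv i by (auto simp: orthonormal_on_def norm_eq_sqrt_inner)
    have "norm (A (u i)) = \<sigma> i" using A_u[OF i] nv sig_pos[OF i] by simp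
    thus ?thesis using K(2)[of "u i"] nu by simp
  qed
  thus ?thesis using K by blast
qed

lemma frac1: "0 \<le> t \<Longrightarrow> 0 < (\<alpha>::real) \<Longrightarrow> t / (t+\<alpha>)^2 \<le> 1/\<alpha>"
proof -
  assume t: "0 \<le> t" and a: "0 < \<alpha>"
  have "(t+\<alpha>)^2 - t*\<alpha> = t^2 + t*\<alpha> + \<alpha>^2" by (simp add: power2_eq_square algebra_simps)
  moreover have "t^2 \<ge> 0" "t*\<alpha> \<ge> 0" "\<alpha>^2 \<ge> 0" using t a by auto
  ultimately have le: "t*\<alpha> \<le> (t+\<alpha>)^2" by linarith
  have p: "(t+\<alpha>)^2 > 0" using t a by simp
  show ?thesis using le p a by (simp add: divide_simps mult.commute)
qed

definition tcoef :: "real \<Rightarrow> 'b \<Rightarrow> nat \<Rightarrow> real" where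
  "tcoef \<alpha> y i = \<sigma> i * inner y (v i) / ((\<sigma> i)\<^sup>2 + \<alpha>)"

lemma tcoef_summable:
  assumes "\<alpha> > 0"
  shows "(\<lambda>i. (tcoef \<alpha> y i)\<^sup>2) summable_on I"
proof (rule summable_on_comparison_test)
  show "(\<lambda>i. (inner y (v i))\<^sup>2 / \<alpha>) summable_on I"
    using summable_on_cmult_left[OF bessel(1)[OF onv], of y "1/\<alpha>"] by (simp add: divide_inverse)
  fix i assume i: "i \<in> I"
  show "0 \<le> (tcoef \<alpha> y i)\<^sup>2" by simp
  have "(tcoef \<alpha> y i)\<^sup>2 = (\<sigma> i)\<^sup>2 / ((\<sigma> i)\<^sup>2 + \<alpha>)\<^sup>2 * (inner y (v i))\<^sup>2"
    by (simp add: tcoef_def power_divide power_mult_distrib)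
  also have "\<dots> \<le> 1 / \<alpha> * (inner y (v i))\<^sup>2"
    by (rule mult_right_mono[OF frac1]) (use assms in auto)
  finally show "(tcoef \<alpha> y i)\<^sup>2 \<le> (inner y (v i))\<^sup>2 / \<alpha>" by simp
qed

lemma tikh_eq:
  assumes a: "\<alpha> > 0"
  shows "tikh A \<alpha> y = (\<Sum>\<^sub>\<infinity>i\<in>I. tcoef \<alpha> y i *\<^sub>R u i)"
proof -
  define x where "x = (\<Sum>\<^sub>\<infinity>i\<in>I. tcoef \<alpha> y i *\<^sub>R u i)"
  note cs = tcoef_summable[OF a, of y]
  have xc: "\<And>i. i \<in> I \<Longrightarrow> inner x (u i) = tcoef \<alpha> y i"
    unfolding x_def by (rule os_coeff[OF onu cs])
  have sol: "inner (A x - y) (A z) + \<alpha> * inner x z = 0" for z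
  proof -
    have h1: "((\<lambda>i. \<sigma> i * inner z (u i) * inner (A x) (v i)) has_sum inner (A x) (A z)) I"
      by (rule inner_A_has_sum)
    have h2: "((\<lambda>i. \<sigma> i * inner z (u i) * inner y (v i)) has_sum inner y (A z)) I"
      by (rule inner_A_has_sum)
    have h3: "((\<lambda>i. tcoef \<alpha> y i * inner (u i) z) has_sum inner x z) I"
      unfolding x_def by (rule os_inner_has_sum[OF onu cs])
    have h3': "((\<lambda>i. \<alpha> * (tcoef \<alpha> y i * inner (u i) z)) has_sum \<alpha> * inner x z) I"
      using has_sum_cmult_right[OF h3] by simp
    have hs: "((\<lambda>i. \<sigma> i * inner z (u i) * inner (A x) (v i) - \<sigma> i * inner z (u i) * inner y (v i)
              + \<alpha> * (tcoef \<alpha> y i * inner (u i) z)) has_sum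
           inner (A x) (A z) - inner y (A z) + \<alpha> * inner x z) I"
      by (rule has_sum_add[OF has_sum_diff'[OF h1 h2] h3'])
    have pw: "\<And>i. i \<in> I \<Longrightarrow> \<sigma> i * inner z (u i) * inner (A x) (v i) - \<sigma> i * inner z (u i) * inner y (v i)
              + \<alpha> * (tcoef \<alpha> y i * inner (u i) z) = 0"
    proof -
      fix i assume i: "i \<in> I"
      have pos: "(\<sigma> i)\<^sup>2 + \<alpha> > 0" using a by (simp add: add_nonneg_pos)
      have Ax: "inner (A x) (v i) = \<sigma> i * tcoef \<alpha> y i" using A_inner_v[OF i] xc[OF i] by simp
      have key: "tcoef \<alpha> y i * ((\<sigma> i)\<^sup>2 + \<alpha>) = \<sigma> i * inner y (v i)"
        using pos by (simp add: tcoef_def)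
      have "\<sigma> i * inner z (u i) * inner (A x) (v i) - \<sigma> i * inner z (u i) * inner y (v i)
              + \<alpha> * (tcoef \<alpha> y i * inner (u i) z)
           = inner z (u i) * (tcoef \<alpha> y i * ((\<sigma> i)\<^sup>2 + \<alpha>) - \<sigma> i * inner y (v i))"
        unfolding Ax by (simp add: inner_commute algebra_simps power2_eq_square)
      also have "\<dots> = 0" using key by simp
      finally show "\<sigma> i * inner z (u i) * inner (A x) (v i) - \<sigma> i * inner z (u i) * inner y (v i)
              + \<alpha> * (tcoef \<alpha> y i * inner (u i) z) = 0" .
    qed
    have "((\<lambda>i. 0) has_sum inner (A x) (A z) - inner y (A z) + \<alpha> * inner x z) I"
      using hs by (subst (asm) has_sum_cong[where g="\<lambda>i. 0"]) (simp add: pw)+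
    hence "inner (A x) (A z) - inner y (A z) + \<alpha> * inner x z = 0"
      using has_sum_unique[OF _ has_sum_0_simp] by blast
    thus ?thesis by (simp add: inner_diff_left)
  qed
  have uniq: "x' = x" if "\<forall>z. inner (A x' - y) (A z) + \<alpha> * inner x' z = 0" for x'
  proof -
    define d where "d = x' - x"
    have "inner (A d) (A d) + \<alpha> * inner d d = 0"
    proof -
      have "inner (A x' - y) (A d) + \<alpha> * inner x' d = 0" using that by blast
      moreover have "inner (A x - y) (A d) + \<alpha> * inner x d = 0" using sol by blast
      ultimately have "inner (A x' - y - (A x - y)) (A d) + \<alpha> * inner (x' - x) d = 0"
        by (simp add: inner_diff_left algebra_simps)
      moreover have "A x' - y - (A x - y) = A d"
        using linear_diff[OF bounded_linear.linear[OF bl]] by (simp add: d_def)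
      ultimately show ?thesis by (simp add: d_def)
    qed
    moreover have "inner (A d) (A d) \<ge> 0" "inner d d \<ge> 0" by auto
    ultimately have "\<alpha> * inner d d = 0"
      using a by (metis add_nonneg_eq_0_iff mult_nonneg_nonneg less_imp_le)
    hence "d = 0" using a by simp
    thus ?thesis by (simp add: d_def)
  qed
  have "tikh A \<alpha> y = x"
    unfolding tikh_def
    by (rule the_equality) (use sol uniq in blast)+
  thus ?thesis by (simp add: x_def)
qed

lemma tikh_norm2:
  assumes a: "\<alpha> > 0"
  shows "(norm (tikh A \<alpha> y))\<^sup>2 = (\<Sum>\<^sub>\<infinity>i\<in>I. (\<sigma> i)\<^sup>2 / ((\<sigma> i)\<^sup>2 + \<alpha>)\<^sup>2 * (inner y (v i))\<^sup>2)"
  unfolding tikh_eq[OF a] os_norm2[OF onu tcoef_summable[OF a]]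
  by (simp add: tcoef_def power_divide power_mult_distrib)

end

lemma pw_e1: "0 < l \<Longrightarrow> 0 < (a::real) \<Longrightarrow> a * l / (l + a)^3 \<le> 1 / (4*a)"
proof -
  assume l: "0 < l" and a: "0 < a"
  have "4 * a * l \<le> (l+a)^2"
  proof -
    have "(l+a)^2 - 4*a*l = (l - a)^2" by (simp add: power2_eq_square algebra_simps)
    thus ?thesis by (smt (verit) zero_le_power2)
  qed
  hence "4 * a * (a * l) \<le> (l+a)^2 * a" using a by (simp add: mult_right_mono algebra_simps)
  also have "\<dots> \<le> (l+a)^2 * (l+a)" using l a by (intro mult_left_mono) auto
  also have "\<dots> = (l+a)^3" by (simp add: power2_eq_square power3_eq_cube)
  finally have "4 * a * (a * l) \<le> (l+a)^3" .
  thus ?thesis using l a by (simp add: divide_simps mult.commute mult.left_commute)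
qed

lemma pw_e2: "0 < l \<Longrightarrow> 0 < (a::real) \<Longrightarrow> l / (l + a)^2 \<le> 1 / (4*a)"
proof -
  assume l: "0 < l" and a: "0 < a"
  have "4 * a * l \<le> (l+a)^2"
  proof -
    have "(l+a)^2 - 4*a*l = (l - a)^2" by (simp add: power2_eq_square algebra_simps)
    thus ?thesis by (smt (verit) zero_le_power2)
  qed
  thus ?thesis using l a by (simp add: divide_simps mult.commute mult.left_commute)
qed

lemma powr_split_bound:
  fixes l L m \<mu> :: real
  assumes l: "0 < l" "l \<le> L" and m: "0 < m" "m \<le> \<mu>"
  shows "(l powr \<mu>)^2 \<le> l powr (2*m) * L powr (2*\<mu> - 2*m)"
proof -
  have "(l powr \<mu>)^2 = l powr (\<mu> + \<mu>)"
    by (subst powr_add) (simp add: power2_eq_square)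
  also have "\<dots> = l powr (2*m + (2*\<mu> - 2*m))" by simp
  also have "\<dots> = l powr (2*m) * l powr (2*\<mu> - 2*m)" by (rule powr_add)
  finally have "(l powr \<mu>)^2 = l powr (2*m) * l powr (2*\<mu> - 2*m)" .
  also have "\<dots> \<le> l powr (2*m) * L powr (2*\<mu> - 2*m)"
    using l m by (intro mult_left_mono powr_mono2) auto
  finally show ?thesis .
qed

lemma pw_x1:
  fixes l a m :: real
  assumes l: "0 < l" and a: "0 < a" and m: "0 < m" "m \<le> 1/2"
  shows "a * l^2 * l powr (2*m) \<le> a powr (2*m) * (l + a)^3"
proof -
  have e1: "a powr (2*m) * a powr (1 - 2*m) = a"
    using a by (subst powr_add[symmetric]) simp
  have e2: "l powr (2 + 2*m) = l^2 * l powr (2*m)"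
    using l by (subst powr_add) simp
  have "a * l^2 * l powr (2*m) = a powr (2*m) * (a powr (1 - 2*m) * l powr (2 + 2*m))"
    unfolding e2 mult.assoc[symmetric] e1 by simp
  also have "\<dots> \<le> a powr (2*m) * ((l+a) powr (1 - 2*m) * (l+a) powr (2 + 2*m))"
    using l a m by (intro mult_left_mono mult_mono powr_mono2) auto
  also have "(l+a) powr (1 - 2*m) * (l+a) powr (2 + 2*m) = (l+a) powr 3"
    by (subst powr_add[symmetric]) simp
  also have "(l+a) powr 3 = (l+a)^3" using l a by simp
  finally show ?thesis .
qed

lemma pw_x2:
  fixes l a m :: real
  assumes l: "0 < l" and a: "0 < a" and m: "0 < m" "m \<le> 1/2"
  shows "a^2 * l powr (2*m) \<le> a powr (2*m) * (l + a)^2"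
proof -
  have e1: "a powr (2*m) * a powr (2 - 2*m) = a^2"
    using a by (subst powr_add[symmetric]) simp
  have "a^2 * l powr (2*m) = a powr (2*m) * (a powr (2 - 2*m) * l powr (2*m))"
    unfolding mult.assoc[symmetric] e1 by simp
  also have "\<dots> \<le> a powr (2*m) * ((l+a) powr (2 - 2*m) * (l+a) powr (2*m))"
    using l a m by (intro mult_left_mono mult_mono powr_mono2) auto
  also have "(l+a) powr (2 - 2*m) * (l+a) powr (2*m) = (l+a) powr 2"
    by (subst powr_add[symmetric]) simp
  also have "(l+a) powr 2 = (l+a)^2" using l a by simp
  finally show ?thesis .
qed

lemma pw_low: "0 < (l::real) \<Longrightarrow> l \<le> a \<Longrightarrow> l / a^2 \<le> 8 * (a * l / (l + a)^3)"
proof -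
  assume l: "0 < l" and la: "l \<le> a"
  have a: "a > 0" using l la by simp
  have "(l+a)^3 \<le> (2*a)^3" using l la by (intro power_mono) auto
  hence le: "l * (l+a)^3 \<le> l * (8 * a^3)" using l by (intro mult_left_mono) (auto simp: power_mult_distrib)
  have p: "a^2 * (l+a)^3 > 0" using l a by simp
  have eqL: "l / a^2 = (l*(l+a)^3) / (a^2*(l+a)^3)" using l a by simp
  have eqR: "8*(a*l/(l+a)^3) = (l*(8*a^3)) / (a^2*(l+a)^3)" using l a
    by (simp add: power2_eq_square power3_eq_cube mult_ac)
  show ?thesis unfolding eqL eqR by (rule divide_right_mono[OF le]) (use p in simp)
qed

lemma pw_high: "0 < (a::real) \<Longrightarrow> a \<le> l \<Longrightarrow> a / l \<le> 8 * (a * l^2 / (l + a)^3)"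
proof -
  assume a: "0 < a" and la: "a \<le> l"
  have l: "l > 0" using a la by simp
  have "(l+a)^3 \<le> (2*l)^3" using a la by (intro power_mono) auto
  hence le: "a * (l+a)^3 \<le> a * (8 * l^3)" using a by (intro mult_left_mono) (auto simp: power_mult_distrib)
  have p: "l * (l+a)^3 > 0" using l a by simp
  have eqL: "a / l = (a*(l+a)^3) / (l*(l+a)^3)" using l a by simp
  have eqR: "8 * (a * l^2 / (l + a)^3) = (a*(8*l^3)) / (l*(l+a)^3)" using l a
    by (simp add: power2_eq_square power3_eq_cube mult_ac)
  show ?thesis unfolding eqL eqR by (rule divide_right_mono[OF le]) (use p in simp)
qed

lemma isum_le:
  fixes f g :: "nat \<Rightarrow> real"
  assumes "g summable_on I" "\<And>i. i \<in> I \<Longrightarrow> 0 \<le> f i" "\<And>i. i \<in> I \<Longrightarrow> f i \<le> g i"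
  shows "f summable_on I" "infsum f I \<le> infsum g I"
proof -
  show s: "f summable_on I" by (rule summable_on_comparison_test[OF assms(1) assms(3) assms(2)])
  show "infsum f I \<le> infsum g I" by (rule infsum_mono[OF s assms(1) assms(3)])
qed

lemma isum_single:
  fixes f :: "nat \<Rightarrow> real"
  assumes "f summable_on I" "\<And>i. i \<in> I \<Longrightarrow> 0 \<le> f i" "j \<in> I"
  shows "f j \<le> infsum f I"
proof -
  have "infsum f {j} = f j" by simp
  moreover have "infsum f {j} \<le> infsum f I"
    by (rule infsum_mono2) (use assms in auto)
  ultimately show ?thesis by simp
qed

lemma isum_restr:
  fixes f :: "nat \<Rightarrow> real"
  shows "infsum f {i\<in>I. P i} = infsum (\<lambda>i. if P i then f i else 0) I"
  by (rule infsum_cong_neutral) auto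

lemma isum_restr_summable:
  fixes f :: "nat \<Rightarrow> real"
  shows "f summable_on {i\<in>I. P i} \<longleftrightarrow> (\<lambda>i. if P i then f i else 0) summable_on I"
  by (rule summable_on_cong_neutral) auto

lemma isum_le2:
  fixes f g h :: "nat \<Rightarrow> real"
  assumes "g summable_on I" "h summable_on I" "\<And>i. i \<in> I \<Longrightarrow> 0 \<le> f i" "\<And>i. i \<in> I \<Longrightarrow> f i \<le> g i + h i"
  shows "f summable_on I" "infsum f I \<le> infsum g I + infsum h I"
proof -
  have gh: "(\<lambda>i. g i + h i) summable_on I" using summable_on_add[OF assms(1,2)] .
  show "f summable_on I" using isum_le(1)[OF gh assms(3,4)] .
  have "infsum f I \<le> infsum (\<lambda>i. g i + h i) I" using isum_le(2)[OF gh assms(3,4)] .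
  also have "\<dots> = infsum g I + infsum h I" by (rule infsum_add[OF assms(1,2)])
  finally show "infsum f I \<le> infsum g I + infsum h I" .
qed

lemma isum_cmult:
  fixes f :: "nat \<Rightarrow> real"
  assumes "f summable_on I"
  shows "infsum (\<lambda>i. c * f i) I = c * infsum f I" "(\<lambda>i. c * f i) summable_on I"
  using infsum_cmult_right[of c f I] summable_on_cmult_right[OF assms] assms by auto

lemma sq_sum_le: "(p + q)^2 \<le> 2 * p^2 + 2 * (q::real)^2"
proof -
  have "2 * p^2 + 2 * q^2 - (p+q)^2 = (p - q)^2" by (simp add: power2_eq_square algebra_simps)
  thus ?thesis by (smt (verit) zero_le_power2)
qed

lemma sq_diff_le: "(p - q)^2 \<le> 2 * p^2 + 2 * (q::real)^2"
  using sq_sum_le[of p "-q"] by simp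

locale rdata =
  fixes I :: "nat set" and \<sigma> w :: "nat \<Rightarrow> real" and \<mu> \<Lambda> \<alpha>max C2 :: real and i0 :: nat
  assumes sp: "\<And>i. i \<in> I \<Longrightarrow> \<sigma> i > 0" and Lb: "\<And>i. i \<in> I \<Longrightarrow> (\<sigma> i)\<^sup>2 \<le> \<Lambda>"
    and amax: "\<alpha>max > 0" and mu: "0 < \<mu>" "\<mu> \<le> 1"
    and ws: "(\<lambda>i. (w i)\<^sup>2) summable_on I"
    and i0: "i0 \<in> I" "w i0 \<noteq> 0"
begin

definition x where "x i = ((\<sigma> i)\<^sup>2) powr \<mu> * w i"
definition m where "m = min \<mu> (1/2)"
definition Pw where "Pw = \<Lambda> powr (2*\<mu>)"
definition Wsum where "Wsum = (\<Sum>\<^sub>\<infinity>i\<in>I. (w i)\<^sup>2)"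
definition c3 where "c3 = \<Lambda> powr (2*\<mu> - 2*m) * Wsum"

definition d where "d e i = \<sigma> i * x i + e i"
definition F where "F e \<alpha> = (\<Sum>\<^sub>\<infinity>i\<in>I. \<alpha> * (\<sigma> i)\<^sup>2 / ((\<sigma> i)\<^sup>2 + \<alpha>) ^ 3 * (d e i)\<^sup>2)"
definition N where "N e \<alpha> = (\<Sum>\<^sub>\<infinity>i\<in>I. (\<sigma> i)\<^sup>2 / ((\<sigma> i)\<^sup>2 + \<alpha>)\<^sup>2 * (d e i)\<^sup>2)"
definition G where "G \<alpha> = (\<Sum>\<^sub>\<infinity>i\<in>I. \<alpha> * (\<sigma> i)\<^sup>2 / ((\<sigma> i)\<^sup>2 + \<alpha>) ^ 3 * (\<sigma> i * x i)\<^sup>2)"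
definition Fe where "Fe e \<alpha> = (\<Sum>\<^sub>\<infinity>i\<in>I. \<alpha> * (\<sigma> i)\<^sup>2 / ((\<sigma> i)\<^sup>2 + \<alpha>) ^ 3 * (e i)\<^sup>2)"
definition Nz where "Nz e \<alpha> = (\<Sum>\<^sub>\<infinity>i\<in>I. (\<sigma> i)\<^sup>2 / ((\<sigma> i)\<^sup>2 + \<alpha>)\<^sup>2 * (e i)\<^sup>2)"
definition B where "B \<alpha> = (\<Sum>\<^sub>\<infinity>i\<in>I. \<alpha>\<^sup>2 / ((\<sigma> i)\<^sup>2 + \<alpha>)\<^sup>2 * (x i)\<^sup>2)"
definition E where "E e \<alpha> = (\<Sum>\<^sub>\<infinity>i\<in>I. (\<sigma> i * d e i / ((\<sigma> i)\<^sup>2 + \<alpha>) - x i)\<^sup>2)"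
definition X where "X = (\<Sum>\<^sub>\<infinity>i\<in>I. (x i)\<^sup>2)"

lemma Lpos: "\<Lambda> > 0"
proof -
  have "(\<sigma> i0)\<^sup>2 > 0" using sp[OF i0(1)] by simp
  thus ?thesis using Lb[OF i0(1)] by linarith
qed

lemma mpos: "0 < m" "m \<le> 1/2" "m \<le> \<mu>" using mu by (auto simp: m_def)

lemma Pw_pos: "Pw > 0" using Lpos by (simp add: Pw_def)

lemma Wsum_nn: "Wsum \<ge> 0" unfolding Wsum_def by (rule infsum_nonneg) simp

lemma c3_nn: "c3 \<ge> 0" using Lpos Wsum_nn by (simp add: c3_def)

lemma x2: "i \<in> I \<Longrightarrow> (x i)\<^sup>2 \<le> Pw * (w i)\<^sup>2"
proof -
  assume i: "i \<in> I"
  have l: "(\<sigma> i)\<^sup>2 > 0" using sp[OF i] by simp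
  have "(((\<sigma> i)\<^sup>2) powr \<mu>)\<^sup>2 = ((\<sigma> i)\<^sup>2) powr (\<mu> + \<mu>)"
    by (subst powr_add) (simp add: power2_eq_square)
  also have "\<dots> = ((\<sigma> i)\<^sup>2) powr (2*\<mu>)" by simp
  also have "\<dots> \<le> Pw" unfolding Pw_def using Lb[OF i] l mu by (intro powr_mono2) auto
  finally show ?thesis by (simp add: x_def power_mult_distrib mult_right_mono)
qed

lemma sx2: "i \<in> I \<Longrightarrow> (\<sigma> i * x i)\<^sup>2 \<le> (\<Lambda> * Pw) * (w i)\<^sup>2"
proof -
  assume i: "i \<in> I"
  have "(\<sigma> i * x i)\<^sup>2 = (\<sigma> i)\<^sup>2 * (x i)\<^sup>2" by (simp add: power_mult_distrib)
  also have "\<dots> \<le> \<Lambda> * (Pw * (w i)\<^sup>2)" using Lb[OF i] x2[OF i] Lpos by (intro mult_mono) auto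
  finally show ?thesis by simp
qed

lemma d2: "i \<in> I \<Longrightarrow> (d e i)\<^sup>2 \<le> (2*\<Lambda>*Pw) * (w i)\<^sup>2 + 2 * (e i)\<^sup>2"
  using sq_sum_le[of "\<sigma> i * x i" "e i"] sx2[of i] unfolding d_def by simp

lemma summ:
  assumes es: "(\<lambda>i. (e i)\<^sup>2) summable_on I"
    and om: "\<And>i. i \<in> I \<Longrightarrow> 0 \<le> om i \<and> om i \<le> c"
    and q: "\<And>i. i \<in> I \<Longrightarrow> (q i)\<^sup>2 \<le> K * (w i)\<^sup>2 + K' * (e i)\<^sup>2"
  shows "(\<lambda>i. om i * (q i)\<^sup>2) summable_on I"
proof (rule isum_le(1))
  show "(\<lambda>i. c * K * (w i)\<^sup>2 + c * K' * (e i)\<^sup>2) summable_on I"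
    using summable_on_add[OF summable_on_cmult_right[OF ws, of "c*K"] summable_on_cmult_right[OF es, of "c*K'"]]
    by (simp add: mult.assoc)
  fix i assume i: "i \<in> I"
  show "0 \<le> om i * (q i)\<^sup>2" using om[OF i] by simp
  have c: "c \<ge> 0" using om[OF i] by linarith
  have "om i * (q i)\<^sup>2 \<le> c * (q i)\<^sup>2" using om[OF i] by (intro mult_right_mono) auto
  also have "\<dots> \<le> c * (K * (w i)\<^sup>2 + K' * (e i)\<^sup>2)" using q[OF i] c by (intro mult_left_mono) auto
  finally show "om i * (q i)\<^sup>2 \<le> c * K * (w i)\<^sup>2 + c * K' * (e i)\<^sup>2" by (simp add: algebra_simps)
qed

lemma wt1: "i \<in> I \<Longrightarrow> 0 < \<alpha> \<Longrightarrow> 0 \<le> \<alpha> * (\<sigma> i)\<^sup>2 / ((\<sigma> i)\<^sup>2 + \<alpha>) ^ 3 \<and> \<alpha> * (\<sigma> i)\<^sup>2 / ((\<sigma> i)\<^sup>2 + \<alpha>) ^ 3 \<le> 1/(4*\<alpha>)"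
  using pw_e1[of "(\<sigma> i)\<^sup>2" \<alpha>] sp[of i] by auto

lemma wt2: "i \<in> I \<Longrightarrow> 0 < \<alpha> \<Longrightarrow> 0 \<le> (\<sigma> i)\<^sup>2 / ((\<sigma> i)\<^sup>2 + \<alpha>)\<^sup>2 \<and> (\<sigma> i)\<^sup>2 / ((\<sigma> i)\<^sup>2 + \<alpha>)\<^sup>2 \<le> 1/(4*\<alpha>)"
  using pw_e2[of "(\<sigma> i)\<^sup>2" \<alpha>] sp[of i] by auto

lemma wt3: "i \<in> I \<Longrightarrow> 0 < \<alpha> \<Longrightarrow> 0 \<le> \<alpha>\<^sup>2 / ((\<sigma> i)\<^sup>2 + \<alpha>)\<^sup>2 \<and> \<alpha>\<^sup>2 / ((\<sigma> i)\<^sup>2 + \<alpha>)\<^sup>2 \<le> 1"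
proof -
  assume i: "i \<in> I" and a: "0 < \<alpha>"
  have "\<alpha>\<^sup>2 \<le> ((\<sigma> i)\<^sup>2 + \<alpha>)\<^sup>2" using a by (intro power_mono) auto
  thus ?thesis using a by (auto simp: divide_le_eq_1)
qed

end

lemma isum_2:
  fixes f g h :: "nat \<Rightarrow> real"
  assumes "g summable_on I" "h summable_on I" "\<And>i. i \<in> I \<Longrightarrow> 0 \<le> f i" "\<And>i. i \<in> I \<Longrightarrow> f i \<le> 2 * g i + 2 * h i"
  shows "infsum f I \<le> 2 * infsum g I + 2 * infsum h I"
proof -
  have "infsum f I \<le> infsum (\<lambda>i. 2 * g i) I + infsum (\<lambda>i. 2 * h i) I"
    by (rule isum_le2(2)[OF summable_on_cmult_right[OF assms(1)] summable_on_cmult_right[OF assms(2)] assms(3,4)])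
  also have "\<dots> = 2 * infsum g I + 2 * infsum h I" by (simp only: isum_cmult(1)[OF assms(1)] isum_cmult(1)[OF assms(2)])
  finally show ?thesis .
qed

lemma isum_c:
  fixes f g :: "nat \<Rightarrow> real"
  assumes "g summable_on I" "\<And>i. i \<in> I \<Longrightarrow> 0 \<le> f i" "\<And>i. i \<in> I \<Longrightarrow> f i \<le> c * g i"
  shows "infsum f I \<le> c * infsum g I"
proof -
  have "infsum f I \<le> infsum (\<lambda>i. c * g i) I"
    by (rule isum_le(2)[OF summable_on_cmult_right[OF assms(1)] assms(2,3)])
  also have "\<dots> = c * infsum g I" by (simp only: isum_cmult(1)[OF assms(1)])
  finally show ?thesis .
qed

lemma wsq_sum: "0 \<le> (c::real) \<Longrightarrow> c * (p + q)\<^sup>2 \<le> 2 * (c * p\<^sup>2) + 2 * (c * q\<^sup>2)"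
  using mult_left_mono[OF sq_sum_le[of p q], of c] by (simp add: algebra_simps)

lemma wsq_diff: "0 \<le> (c::real) \<Longrightarrow> c * (p - q)\<^sup>2 \<le> 2 * (c * p\<^sup>2) + 2 * (c * q\<^sup>2)"
  using mult_left_mono[OF sq_diff_le[of p q], of c] by (simp add: algebra_simps)

context rdata begin

lemma sF: "(\<lambda>i. (e i)\<^sup>2) summable_on I \<Longrightarrow> 0 < \<alpha> \<Longrightarrow>
   (\<lambda>i. \<alpha> * (\<sigma> i)\<^sup>2 / ((\<sigma> i)\<^sup>2 + \<alpha>) ^ 3 * (d e i)\<^sup>2) summable_on I"
  by (rule summ[where e=e and c="1/(4*\<alpha>)" and K="2*\<Lambda>*Pw" and K'=2]) (simp_all add: wt1 d2)

lemma sN: "(\<lambda>i. (e i)\<^sup>2) summable_on I \<Longrightarrow> 0 < \<alpha> \<Longrightarrow>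
   (\<lambda>i. (\<sigma> i)\<^sup>2 / ((\<sigma> i)\<^sup>2 + \<alpha>)\<^sup>2 * (d e i)\<^sup>2) summable_on I"
  by (rule summ[where e=e and c="1/(4*\<alpha>)" and K="2*\<Lambda>*Pw" and K'=2]) (simp_all add: wt2 d2)

lemma sG: "0 < \<alpha> \<Longrightarrow>
   (\<lambda>i. \<alpha> * (\<sigma> i)\<^sup>2 / ((\<sigma> i)\<^sup>2 + \<alpha>) ^ 3 * (\<sigma> i * x i)\<^sup>2) summable_on I"
  by (rule summ[where e="\<lambda>i. 0" and c="1/(4*\<alpha>)" and K="\<Lambda>*Pw" and K'=0]) (simp_all add: wt1 sx2)

lemma sFe: "(\<lambda>i. (e i)\<^sup>2) summable_on I \<Longrightarrow> 0 < \<alpha> \<Longrightarrow>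
   (\<lambda>i. \<alpha> * (\<sigma> i)\<^sup>2 / ((\<sigma> i)\<^sup>2 + \<alpha>) ^ 3 * (e i)\<^sup>2) summable_on I"
  by (rule summ[where e=e and c="1/(4*\<alpha>)" and K="0" and K'=1]) (simp_all add: wt1)

lemma sNz: "(\<lambda>i. (e i)\<^sup>2) summable_on I \<Longrightarrow> 0 < \<alpha> \<Longrightarrow>
   (\<lambda>i. (\<sigma> i)\<^sup>2 / ((\<sigma> i)\<^sup>2 + \<alpha>)\<^sup>2 * (e i)\<^sup>2) summable_on I"
  by (rule summ[where e=e and c="1/(4*\<alpha>)" and K="0" and K'=1]) (simp_all add: wt2)

lemma sB: "0 < \<alpha> \<Longrightarrow> (\<lambda>i. \<alpha>\<^sup>2 / ((\<sigma> i)\<^sup>2 + \<alpha>)\<^sup>2 * (x i)\<^sup>2) summable_on I"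
  by (rule summ[where e="\<lambda>i. 0" and c=1 and K="Pw" and K'=0]) (simp_all add: wt3 x2)

lemma sX: "(\<lambda>i. (x i)\<^sup>2) summable_on I"
  using summ[where e="\<lambda>i. 0" and c=1 and K="Pw" and K'=0 and om="\<lambda>i. 1" and q=x] x2 by auto

lemma Eterm: "i \<in> I \<Longrightarrow> 0 < \<alpha> \<Longrightarrow> (\<sigma> i * d e i / ((\<sigma> i)\<^sup>2 + \<alpha>) - x i)\<^sup>2
   \<le> 2 * ((\<sigma> i)\<^sup>2 / ((\<sigma> i)\<^sup>2 + \<alpha>)\<^sup>2 * (e i)\<^sup>2) + 2 * (\<alpha>\<^sup>2 / ((\<sigma> i)\<^sup>2 + \<alpha>)\<^sup>2 * (x i)\<^sup>2)"
proof -
  assume i: "i \<in> I" and a: "0 < \<alpha>"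
  have p: "(\<sigma> i)\<^sup>2 + \<alpha> > 0" using a by (simp add: add_nonneg_pos)
  have num: "\<sigma> i * d e i - x i * ((\<sigma> i)\<^sup>2 + \<alpha>) = \<sigma> i * e i - \<alpha> * x i"
    by (simp add: d_def power2_eq_square algebra_simps)
  have p0: "(\<sigma> i)\<^sup>2 + \<alpha> \<noteq> 0" using p by simp
  have "\<sigma> i * d e i / ((\<sigma> i)\<^sup>2 + \<alpha>) - x i = (\<sigma> i * d e i - x i * ((\<sigma> i)\<^sup>2 + \<alpha>)) / ((\<sigma> i)\<^sup>2 + \<alpha>)"
    using p0 by (simp add: diff_divide_distrib)
  also have "\<dots> = \<sigma> i * e i / ((\<sigma> i)\<^sup>2 + \<alpha>) - \<alpha> * x i / ((\<sigma> i)\<^sup>2 + \<alpha>)"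
    unfolding num by (simp add: diff_divide_distrib)
  finally have "\<sigma> i * d e i / ((\<sigma> i)\<^sup>2 + \<alpha>) - x i = \<sigma> i * e i / ((\<sigma> i)\<^sup>2 + \<alpha>) - \<alpha> * x i / ((\<sigma> i)\<^sup>2 + \<alpha>)" .
  hence "(\<sigma> i * d e i / ((\<sigma> i)\<^sup>2 + \<alpha>) - x i)\<^sup>2 \<le> 2 * (\<sigma> i * e i / ((\<sigma> i)\<^sup>2 + \<alpha>))\<^sup>2 + 2 * (\<alpha> * x i / ((\<sigma> i)\<^sup>2 + \<alpha>))\<^sup>2"
    using sq_diff_le by simp
  thus ?thesis by (simp add: power_divide power_mult_distrib)
qed

lemma sE: "(\<lambda>i. (e i)\<^sup>2) summable_on I \<Longrightarrow> 0 < \<alpha> \<Longrightarrow>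
   (\<lambda>i. (\<sigma> i * d e i / ((\<sigma> i)\<^sup>2 + \<alpha>) - x i)\<^sup>2) summable_on I"
proof -
  assume es: "(\<lambda>i. (e i)\<^sup>2) summable_on I" and a: "0 < \<alpha>"
  show ?thesis
  by (rule isum_le2(1)[OF summable_on_cmult_right[OF sNz[OF es a], of 2] summable_on_cmult_right[OF sB[OF a], of 2]])
     (use Eterm a in auto)
qed

lemma E_le: "(\<lambda>i. (e i)\<^sup>2) summable_on I \<Longrightarrow> 0 < \<alpha> \<Longrightarrow> E e \<alpha> \<le> 2 * Nz e \<alpha> + 2 * B \<alpha>"
proof -
  assume es: "(\<lambda>i. (e i)\<^sup>2) summable_on I" and a: "0 < \<alpha>"
  have "E e \<alpha> \<le> (\<Sum>\<^sub>\<infinity>i\<in>I. 2 * ((\<sigma> i)\<^sup>2 / ((\<sigma> i)\<^sup>2 + \<alpha>)\<^sup>2 * (e i)\<^sup>2)) + (\<Sum>\<^sub>\<infinity>i\<in>I. 2 * (\<alpha>\<^sup>2 / ((\<sigma> i)\<^sup>2 + \<alpha>)\<^sup>2 * (x i)\<^sup>2))"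
    unfolding E_def
    by (rule isum_le2(2)[OF summable_on_cmult_right[OF sNz[OF es a]] summable_on_cmult_right[OF sB[OF a]]])
       (use Eterm a in auto)
  also have "\<dots> = 2 * Nz e \<alpha> + 2 * B \<alpha>"
    unfolding Nz_def B_def by (simp only: isum_cmult(1)[OF sNz[OF es a]] isum_cmult(1)[OF sB[OF a]])
  finally show ?thesis .
qed


lemma F_le: assumes es: "(\<lambda>i. (e i)\<^sup>2) summable_on I" and a: "0 < \<alpha>"
  shows "F e \<alpha> \<le> 2 * G \<alpha> + 2 * Fe e \<alpha>"
  unfolding F_def G_def Fe_def
proof (rule isum_2[OF sG[OF a] sFe[OF es a]])
  fix i assume i: "i \<in> I"
  show "0 \<le> \<alpha> * (\<sigma> i)\<^sup>2 / ((\<sigma> i)\<^sup>2 + \<alpha>) ^ 3 * (d e i)\<^sup>2" using wt1[OF i a] by (intro mult_nonneg_nonneg) auto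
  show "\<alpha> * (\<sigma> i)\<^sup>2 / ((\<sigma> i)\<^sup>2 + \<alpha>) ^ 3 * (d e i)\<^sup>2 \<le> 2 * (\<alpha> * (\<sigma> i)\<^sup>2 / ((\<sigma> i)\<^sup>2 + \<alpha>) ^ 3 * (\<sigma> i * x i)\<^sup>2) + 2 * (\<alpha> * (\<sigma> i)\<^sup>2 / ((\<sigma> i)\<^sup>2 + \<alpha>) ^ 3 * (e i)\<^sup>2)"
    unfolding d_def by (rule wsq_sum) (use wt1[OF i a] in simp)
qed

lemma G_le: assumes es: "(\<lambda>i. (e i)\<^sup>2) summable_on I" and a: "0 < \<alpha>"
  shows "G \<alpha> \<le> 2 * F e \<alpha> + 2 * Fe e \<alpha>"
  unfolding F_def G_def Fe_def
proof (rule isum_2[OF sF[OF es a] sFe[OF es a]])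
  fix i assume i: "i \<in> I"
  show "0 \<le> \<alpha> * (\<sigma> i)\<^sup>2 / ((\<sigma> i)\<^sup>2 + \<alpha>) ^ 3 * (\<sigma> i * x i)\<^sup>2" using wt1[OF i a] by (intro mult_nonneg_nonneg) auto
  have "\<sigma> i * x i = d e i - e i" by (simp add: d_def)
  thus "\<alpha> * (\<sigma> i)\<^sup>2 / ((\<sigma> i)\<^sup>2 + \<alpha>) ^ 3 * (\<sigma> i * x i)\<^sup>2 \<le> 2 * (\<alpha> * (\<sigma> i)\<^sup>2 / ((\<sigma> i)\<^sup>2 + \<alpha>) ^ 3 * (d e i)\<^sup>2) + 2 * (\<alpha> * (\<sigma> i)\<^sup>2 / ((\<sigma> i)\<^sup>2 + \<alpha>) ^ 3 * (e i)\<^sup>2)"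
    by (simp only:) (rule wsq_diff, use wt1[OF i a] in simp)
qed

lemma Fe_le2: assumes es: "(\<lambda>i. (e i)\<^sup>2) summable_on I" and a: "0 < \<alpha>"
  shows "Fe e \<alpha> \<le> 2 * F e \<alpha> + 2 * G \<alpha>"
  unfolding F_def G_def Fe_def
proof (rule isum_2[OF sF[OF es a] sG[OF a]])
  fix i assume i: "i \<in> I"
  show "0 \<le> \<alpha> * (\<sigma> i)\<^sup>2 / ((\<sigma> i)\<^sup>2 + \<alpha>) ^ 3 * (e i)\<^sup>2" using wt1[OF i a] by (intro mult_nonneg_nonneg) auto
  have "e i = d e i - \<sigma> i * x i" by (simp add: d_def)
  thus "\<alpha> * (\<sigma> i)\<^sup>2 / ((\<sigma> i)\<^sup>2 + \<alpha>) ^ 3 * (e i)\<^sup>2 \<le> 2 * (\<alpha> * (\<sigma> i)\<^sup>2 / ((\<sigma> i)\<^sup>2 + \<alpha>) ^ 3 * (d e i)\<^sup>2) + 2 * (\<alpha> * (\<sigma> i)\<^sup>2 / ((\<sigma> i)\<^sup>2 + \<alpha>) ^ 3 * (\<sigma> i * x i)\<^sup>2)"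
    by (simp only:) (rule wsq_diff, use wt1[OF i a] in simp)
qed

lemma Fe_le: assumes es: "(\<lambda>i. (e i)\<^sup>2) summable_on I" and a: "0 < \<alpha>"
  shows "Fe e \<alpha> \<le> 1/(4*\<alpha>) * (\<Sum>\<^sub>\<infinity>i\<in>I. (e i)\<^sup>2)"
  unfolding Fe_def
proof (rule isum_c[OF es])
  fix i assume i: "i \<in> I"
  show "0 \<le> \<alpha> * (\<sigma> i)\<^sup>2 / ((\<sigma> i)\<^sup>2 + \<alpha>) ^ 3 * (e i)\<^sup>2" using wt1[OF i a] by (intro mult_nonneg_nonneg) auto
  show "\<alpha> * (\<sigma> i)\<^sup>2 / ((\<sigma> i)\<^sup>2 + \<alpha>) ^ 3 * (e i)\<^sup>2 \<le> 1/(4*\<alpha>) * (e i)\<^sup>2"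
    using wt1[OF i a] by (intro mult_right_mono) auto
qed

lemma Nz_le: assumes es: "(\<lambda>i. (e i)\<^sup>2) summable_on I" and a: "0 < \<alpha>"
  shows "Nz e \<alpha> \<le> 1/(4*\<alpha>) * (\<Sum>\<^sub>\<infinity>i\<in>I. (e i)\<^sup>2)"
  unfolding Nz_def
proof (rule isum_c[OF es])
  fix i assume i: "i \<in> I"
  show "0 \<le> (\<sigma> i)\<^sup>2 / ((\<sigma> i)\<^sup>2 + \<alpha>)\<^sup>2 * (e i)\<^sup>2" using wt2[OF i a] by (intro mult_nonneg_nonneg) auto
  show "(\<sigma> i)\<^sup>2 / ((\<sigma> i)\<^sup>2 + \<alpha>)\<^sup>2 * (e i)\<^sup>2 \<le> 1/(4*\<alpha>) * (e i)\<^sup>2"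
    using wt2[OF i a] by (intro mult_right_mono) auto
qed

lemma N_le: assumes es: "(\<lambda>i. (e i)\<^sup>2) summable_on I" and a: "0 < \<alpha>"
  shows "N e \<alpha> \<le> 2 * X + 2 * Nz e \<alpha>"
  unfolding N_def X_def Nz_def
proof (rule isum_2[OF sX sNz[OF es a]])
  fix i assume i: "i \<in> I"
  show "0 \<le> (\<sigma> i)\<^sup>2 / ((\<sigma> i)\<^sup>2 + \<alpha>)\<^sup>2 * (d e i)\<^sup>2" using wt2[OF i a] by (intro mult_nonneg_nonneg) auto
  have "(\<sigma> i)\<^sup>2 / ((\<sigma> i)\<^sup>2 + \<alpha>)\<^sup>2 * (d e i)\<^sup>2 \<le> 2 * ((\<sigma> i)\<^sup>2 / ((\<sigma> i)\<^sup>2 + \<alpha>)\<^sup>2 * (\<sigma> i * x i)\<^sup>2) + 2 * ((\<sigma> i)\<^sup>2 / ((\<sigma> i)\<^sup>2 + \<alpha>)\<^sup>2 * (e i)\<^sup>2)"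
    unfolding d_def by (rule wsq_sum) (use wt2[OF i a] in simp)
  moreover have "(\<sigma> i)\<^sup>2 / ((\<sigma> i)\<^sup>2 + \<alpha>)\<^sup>2 * (\<sigma> i * x i)\<^sup>2 \<le> (x i)\<^sup>2"
  proof -
    have l: "(\<sigma> i)\<^sup>2 > 0" using sp[OF i] by simp
    have "((\<sigma> i)\<^sup>2)\<^sup>2 \<le> ((\<sigma> i)\<^sup>2 + \<alpha>)\<^sup>2" using l a by (intro power_mono) auto
    hence "((\<sigma> i)\<^sup>2)\<^sup>2 / ((\<sigma> i)\<^sup>2 + \<alpha>)\<^sup>2 \<le> 1" using l a by (simp add: divide_le_eq_1)
    hence A: "((\<sigma> i)\<^sup>2)\<^sup>2 / ((\<sigma> i)\<^sup>2 + \<alpha>)\<^sup>2 * (x i)\<^sup>2 \<le> 1 * (x i)\<^sup>2" by (intro mult_right_mono) auto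
    have Beq: "(\<sigma> i)\<^sup>2 / ((\<sigma> i)\<^sup>2 + \<alpha>)\<^sup>2 * (\<sigma> i * x i)\<^sup>2 = ((\<sigma> i)\<^sup>2)\<^sup>2 / ((\<sigma> i)\<^sup>2 + \<alpha>)\<^sup>2 * (x i)\<^sup>2"
      by (simp add: power_mult_distrib power2_eq_square mult_ac)
    show ?thesis using A by (simp only: Beq mult_1_left)
  qed
  ultimately show "(\<sigma> i)\<^sup>2 / ((\<sigma> i)\<^sup>2 + \<alpha>)\<^sup>2 * (d e i)\<^sup>2 \<le> 2 * (x i)\<^sup>2 + 2 * ((\<sigma> i)\<^sup>2 / ((\<sigma> i)\<^sup>2 + \<alpha>)\<^sup>2 * (e i)\<^sup>2)"
    by linarith
qed

end

context rdata begin

lemma Gpt: assumes i: "i \<in> I" and a: "0 < \<alpha>"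
  shows "\<alpha> * (\<sigma> i)\<^sup>2 / ((\<sigma> i)\<^sup>2 + \<alpha>) ^ 3 * (\<sigma> i * x i)\<^sup>2 \<le> (\<Lambda> powr (2*\<mu> - 2*m) * \<alpha> powr (2*m)) * (w i)\<^sup>2"
proof -
  define l where "l = (\<sigma> i)\<^sup>2"
  define L' where "L' = \<Lambda> powr (2*\<mu> - 2*m)"
  have l: "0 < l" "l \<le> \<Lambda>" using sp[OF i] Lb[OF i] by (auto simp: l_def)
  have L': "L' \<ge> 0" by (simp add: L'_def)
  have h1: "(l powr \<mu>)\<^sup>2 \<le> l powr (2*m) * L'"
    unfolding L'_def by (rule powr_split_bound) (use l mpos in auto)
  have h2: "\<alpha> * l^2 * l powr (2*m) \<le> \<alpha> powr (2*m) * (l + \<alpha>)^3"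
    by (rule pw_x1) (use l a mpos in auto)
  have "\<alpha> * l * l * (l powr \<mu>)\<^sup>2 \<le> \<alpha> * l * l * (l powr (2*m) * L')"
    using h1 l a by (intro mult_left_mono) auto
  also have "\<dots> = (\<alpha> * l^2 * l powr (2*m)) * L'" by (simp add: power2_eq_square mult_ac)
  also have "\<dots> \<le> (\<alpha> powr (2*m) * (l + \<alpha>)^3) * L'" using h2 L' by (rule mult_right_mono)
  finally have h3: "\<alpha> * l * l * (l powr \<mu>)\<^sup>2 \<le> (L' * \<alpha> powr (2*m)) * (l + \<alpha>)^3" by (simp add: mult_ac)
  have p: "(l + \<alpha>)^3 > 0" using l a by simp
  have h4: "\<alpha> * l * l * (l powr \<mu>)\<^sup>2 / (l + \<alpha>)^3 \<le> L' * \<alpha> powr (2*m)"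
    using h3 p by (simp add: divide_le_eq)
  have eq: "\<alpha> * (\<sigma> i)\<^sup>2 / ((\<sigma> i)\<^sup>2 + \<alpha>) ^ 3 * (\<sigma> i * x i)\<^sup>2 = (\<alpha> * l * l * (l powr \<mu>)\<^sup>2 / (l + \<alpha>)^3) * (w i)\<^sup>2"
    by (simp add: l_def x_def power_mult_distrib)
  show ?thesis unfolding eq L'_def[symmetric] by (rule mult_right_mono[OF h4]) simp
qed

lemma G_pw: assumes a: "0 < \<alpha>" shows "G \<alpha> \<le> c3 * \<alpha> powr (2*m)"
proof -
  have "G \<alpha> \<le> (\<Lambda> powr (2*\<mu> - 2*m) * \<alpha> powr (2*m)) * Wsum"
    unfolding G_def Wsum_def
    by (rule isum_c[OF ws]) (use wt1 a Gpt in \<open>auto intro!: mult_nonneg_nonneg\<close>)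
  thus ?thesis by (simp add: c3_def mult_ac)
qed

lemma Bpt: assumes i: "i \<in> I" and a: "0 < \<alpha>"
  shows "\<alpha>\<^sup>2 / ((\<sigma> i)\<^sup>2 + \<alpha>)\<^sup>2 * (x i)\<^sup>2 \<le> (\<Lambda> powr (2*\<mu> - 2*m) * \<alpha> powr (2*m)) * (w i)\<^sup>2"
proof -
  define l where "l = (\<sigma> i)\<^sup>2"
  define L' where "L' = \<Lambda> powr (2*\<mu> - 2*m)"
  have l: "0 < l" "l \<le> \<Lambda>" using sp[OF i] Lb[OF i] by (auto simp: l_def)
  have L': "L' \<ge> 0" by (simp add: L'_def)
  have h1: "(l powr \<mu>)\<^sup>2 \<le> l powr (2*m) * L'"
    unfolding L'_def by (rule powr_split_bound) (use l mpos in auto)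
  have h2: "\<alpha>^2 * l powr (2*m) \<le> \<alpha> powr (2*m) * (l + \<alpha>)^2"
    by (rule pw_x2) (use l a mpos in auto)
  have "\<alpha>^2 * (l powr \<mu>)\<^sup>2 \<le> \<alpha>^2 * (l powr (2*m) * L')"
    using h1 by (intro mult_left_mono) auto
  also have "\<dots> = (\<alpha>^2 * l powr (2*m)) * L'" by (simp add: mult_ac)
  also have "\<dots> \<le> (\<alpha> powr (2*m) * (l + \<alpha>)^2) * L'" using h2 L' by (rule mult_right_mono)
  finally have h3: "\<alpha>^2 * (l powr \<mu>)\<^sup>2 \<le> (L' * \<alpha> powr (2*m)) * (l + \<alpha>)^2" by (simp add: mult_ac)
  have p: "(l + \<alpha>)^2 > 0" using l a by simp
  have h4: "\<alpha>^2 * (l powr \<mu>)\<^sup>2 / (l + \<alpha>)^2 \<le> L' * \<alpha> powr (2*m)"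
    using h3 p by (simp add: divide_le_eq)
  have eq: "\<alpha>\<^sup>2 / ((\<sigma> i)\<^sup>2 + \<alpha>)\<^sup>2 * (x i)\<^sup>2 = (\<alpha>^2 * (l powr \<mu>)\<^sup>2 / (l + \<alpha>)^2) * (w i)\<^sup>2"
    by (simp add: l_def x_def power_mult_distrib)
  show ?thesis unfolding eq L'_def[symmetric] by (rule mult_right_mono[OF h4]) simp
qed

lemma B_pw: assumes a: "0 < \<alpha>" shows "B \<alpha> \<le> c3 * \<alpha> powr (2*m)"
proof -
  have "B \<alpha> \<le> (\<Lambda> powr (2*\<mu> - 2*m) * \<alpha> powr (2*m)) * Wsum"
    unfolding B_def Wsum_def
    by (rule isum_c[OF ws]) (use wt3 a Bpt in \<open>auto intro!: mult_nonneg_nonneg\<close>)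
  thus ?thesis by (simp add: c3_def mult_ac)
qed

definition n0 where "n0 = ((\<sigma> i0)\<^sup>2)\<^sup>2 * (x i0)\<^sup>2 / (4 * ((\<sigma> i0)\<^sup>2 + \<alpha>max)\<^sup>2)"
definition g0 where "g0 = ((\<sigma> i0)\<^sup>2)\<^sup>2 * (x i0)\<^sup>2 / ((\<sigma> i0)\<^sup>2 + \<alpha>max) ^ 3"

lemma x0: "x i0 \<noteq> 0" using i0 sp[OF i0(1)] by (simp add: x_def)

lemma n0_pos: "n0 > 0"
proof -
  have "(\<sigma> i0)\<^sup>2 + \<alpha>max > 0" using amax by (simp add: add_nonneg_pos)
  thus ?thesis unfolding n0_def using x0 sp[OF i0(1)] by (intro divide_pos_pos mult_pos_pos) auto
qed
lemma g0_pos: "g0 > 0" unfolding g0_def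
  by (intro divide_pos_pos mult_pos_pos) (use x0 sp[OF i0(1)] amax in \<open>auto intro: add_pos_pos\<close>)

lemma N_ge: assumes es: "(\<lambda>i. (e i)\<^sup>2) summable_on I" and a: "0 < \<alpha>" "\<alpha> \<le> \<alpha>max"
  and e0: "\<bar>e i0\<bar> \<le> \<bar>\<sigma> i0 * x i0\<bar> / 2"
  shows "n0 \<le> N e \<alpha>"
proof -
  define l where "l = (\<sigma> i0)\<^sup>2"
  have l: "l > 0" using sp[OF i0(1)] by (simp add: l_def)
  have "\<bar>d e i0\<bar> \<ge> \<bar>\<sigma> i0 * x i0\<bar> / 2" using e0 unfolding d_def by linarith
  hence "(\<bar>\<sigma> i0 * x i0\<bar> / 2)\<^sup>2 \<le> (\<bar>d e i0\<bar>)\<^sup>2" by (intro power_mono) auto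
  hence d0: "l * (x i0)\<^sup>2 / 4 \<le> (d e i0)\<^sup>2" by (simp add: l_def power_mult_distrib power_divide)
  have w: "l / (l + \<alpha>max)\<^sup>2 \<le> l / (l + \<alpha>)\<^sup>2"
    using l a by (intro divide_left_mono power_mono mult_pos_pos) auto
  have "n0 = (l / (l + \<alpha>max)\<^sup>2) * (l * (x i0)\<^sup>2 / 4)" by (simp add: n0_def l_def power2_eq_square mult_ac)
  also have "\<dots> \<le> (l / (l + \<alpha>)\<^sup>2) * (d e i0)\<^sup>2"
    using w d0 l by (intro mult_mono) auto
  also have "\<dots> \<le> N e \<alpha>" unfolding N_def l_def
    by (rule isum_single[OF sN[OF es a(1)] _ i0(1)]) (use wt2 a in \<open>auto intro!: mult_nonneg_nonneg\<close>)
  finally show ?thesis .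
qed

lemma G_ge: assumes a: "0 < \<alpha>" "\<alpha> \<le> \<alpha>max"
  shows "g0 * \<alpha> \<le> G \<alpha>"
proof -
  define l where "l = (\<sigma> i0)\<^sup>2"
  have l: "l > 0" using sp[OF i0(1)] by (simp add: l_def)
  have w: "\<alpha> * l / (l + \<alpha>max)^3 \<le> \<alpha> * l / (l + \<alpha>)^3"
    using l a by (intro divide_left_mono power_mono mult_pos_pos) auto
  have "g0 * \<alpha> = (\<alpha> * l / (l + \<alpha>max)^3) * (l * (x i0)\<^sup>2)" by (simp add: g0_def l_def power2_eq_square mult_ac)
  also have "\<dots> \<le> (\<alpha> * l / (l + \<alpha>)^3) * (l * (x i0)\<^sup>2)"
    using w l by (intro mult_right_mono) auto
  also have "\<dots> = \<alpha> * (\<sigma> i0)\<^sup>2 / ((\<sigma> i0)\<^sup>2 + \<alpha>) ^ 3 * (\<sigma> i0 * x i0)\<^sup>2" by (simp add: l_def power_mult_distrib)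
  also have "\<dots> \<le> G \<alpha>" unfolding G_def
    by (rule isum_single[OF sG[OF a(1)] _ i0(1)]) (use wt1 a in \<open>auto intro!: mult_nonneg_nonneg\<close>)
  finally show ?thesis .
qed

end

lemma hA: "0 < l \<Longrightarrow> 0 < (a::real) \<Longrightarrow> l / (l + a)\<^sup>2 \<le> l / a\<^sup>2"
  by (intro divide_left_mono power_mono mult_pos_pos) auto

lemma hB: "0 < l \<Longrightarrow> 0 < (a::real) \<Longrightarrow> l / (l + a)\<^sup>2 \<le> 1 / l"
proof -
  assume l: "0 < l" and a: "0 < a"
  have "l / (l + a)\<^sup>2 \<le> l / l\<^sup>2" by (intro divide_left_mono power_mono mult_pos_pos) (use l a in auto)
  also have "\<dots> = 1 / l" using l by (simp add: power2_eq_square)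
  finally show ?thesis .
qed

lemma hC: "0 < (a::real) \<Longrightarrow> a \<le> l \<Longrightarrow> a\<^sup>2 / (l + a)\<^sup>2 \<le> a / l"
proof -
  assume a: "0 < a" and al: "a \<le> l"
  have l: "0 < l" using a al by simp
  have "a\<^sup>2 / (l + a)\<^sup>2 \<le> a\<^sup>2 / l\<^sup>2" by (intro divide_left_mono power_mono mult_pos_pos) (use l a in auto)
  also have "\<dots> = (a / l) * (a / l)" by (simp add: power2_eq_square)
  also have "\<dots> \<le> (a / l) * 1" using a l al by (intro mult_left_mono) auto
  finally show ?thesis by simp
qed

context rdata begin

lemma B_le_D: assumes a: "0 < \<alpha>" and D: "D \<ge> 0"
  and Dc: "(\<Sum>\<^sub>\<infinity>i\<in>{i\<in>I. (\<sigma> i)\<^sup>2 \<le> \<alpha>}. (x i)\<^sup>2) \<le> D * (\<Sum>\<^sub>\<infinity>i\<in>{i\<in>I. (\<sigma> i)\<^sup>2 \<ge> \<alpha>}. \<alpha> / (\<sigma> i)\<^sup>2 * (x i)\<^sup>2)"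
  shows "B \<alpha> \<le> 8 * (D + 1) * G \<alpha>"
proof -
  define f1 where "f1 i = (if (\<sigma> i)\<^sup>2 \<le> \<alpha> then (x i)\<^sup>2 else 0)" for i
  define f2 where "f2 i = (if (\<sigma> i)\<^sup>2 \<ge> \<alpha> then \<alpha> / (\<sigma> i)\<^sup>2 * (x i)\<^sup>2 else 0)" for i
  have f2b: "0 \<le> f2 i \<and> f2 i \<le> (x i)\<^sup>2" if i: "i \<in> I" for i
  proof (cases "(\<sigma> i)\<^sup>2 \<ge> \<alpha>")
    case True
    hence q: "\<alpha> / (\<sigma> i)\<^sup>2 \<le> 1" using a by (auto simp: divide_le_eq_1)
    have "\<alpha> / (\<sigma> i)\<^sup>2 * (x i)\<^sup>2 \<le> 1 * (x i)\<^sup>2" using q by (intro mult_right_mono) auto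
    thus ?thesis using True a by (simp add: f2_def)
  qed (simp add: f2_def)
  have s1: "f1 summable_on I" by (rule isum_le(1)[OF sX]) (auto simp: f1_def)
  have s2: "f2 summable_on I" by (rule isum_le(1)[OF sX]) (use f2b in auto)
  have S1: "infsum f1 I = (\<Sum>\<^sub>\<infinity>i\<in>{i\<in>I. (\<sigma> i)\<^sup>2 \<le> \<alpha>}. (x i)\<^sup>2)" unfolding f1_def by (simp only: isum_restr)
  have S2: "infsum f2 I = (\<Sum>\<^sub>\<infinity>i\<in>{i\<in>I. (\<sigma> i)\<^sup>2 \<ge> \<alpha>}. \<alpha> / (\<sigma> i)\<^sup>2 * (x i)\<^sup>2)" unfolding f2_def by (simp only: isum_restr)
  have "B \<alpha> \<le> infsum f1 I + infsum f2 I" unfolding B_def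
  proof (rule isum_le2(2)[OF s1 s2])
    fix i assume i: "i \<in> I"
    show "0 \<le> \<alpha>\<^sup>2 / ((\<sigma> i)\<^sup>2 + \<alpha>)\<^sup>2 * (x i)\<^sup>2" by simp
    show "\<alpha>\<^sup>2 / ((\<sigma> i)\<^sup>2 + \<alpha>)\<^sup>2 * (x i)\<^sup>2 \<le> f1 i + f2 i"
    proof (cases "(\<sigma> i)\<^sup>2 \<le> \<alpha>")
      case True
      have "\<alpha>\<^sup>2 / ((\<sigma> i)\<^sup>2 + \<alpha>)\<^sup>2 * (x i)\<^sup>2 \<le> 1 * (x i)\<^sup>2" using wt3[OF i a] by (intro mult_right_mono) auto
      thus ?thesis using True f2b[OF i] by (simp add: f1_def)
    next
      case False
      have "\<alpha>\<^sup>2 / ((\<sigma> i)\<^sup>2 + \<alpha>)\<^sup>2 * (x i)\<^sup>2 \<le> \<alpha> / (\<sigma> i)\<^sup>2 * (x i)\<^sup>2"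
        using False a by (intro mult_right_mono hC) auto
      thus ?thesis using False by (simp add: f1_def f2_def)
    qed
  qed
  also have "infsum f2 I \<le> 8 * G \<alpha>" unfolding G_def
  proof (rule isum_c[OF sG[OF a]])
    fix i assume i: "i \<in> I"
    show "0 \<le> f2 i" using f2b[OF i] by simp
    show "f2 i \<le> 8 * (\<alpha> * (\<sigma> i)\<^sup>2 / ((\<sigma> i)\<^sup>2 + \<alpha>) ^ 3 * (\<sigma> i * x i)\<^sup>2)"
    proof (cases "(\<sigma> i)\<^sup>2 \<ge> \<alpha>")
      case True
      have "\<alpha> / (\<sigma> i)\<^sup>2 * (x i)\<^sup>2 \<le> 8 * (\<alpha> * ((\<sigma> i)\<^sup>2)\<^sup>2 / ((\<sigma> i)\<^sup>2 + \<alpha>) ^ 3) * (x i)\<^sup>2"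
        using True a by (intro mult_right_mono pw_high) auto
      also have "\<dots> = 8 * (\<alpha> * (\<sigma> i)\<^sup>2 / ((\<sigma> i)\<^sup>2 + \<alpha>) ^ 3 * (\<sigma> i * x i)\<^sup>2)"
        by (simp add: power_mult_distrib power2_eq_square mult_ac)
      finally show ?thesis using True by (simp add: f2_def)
    next
      case False
      have "0 \<le> \<alpha> * (\<sigma> i)\<^sup>2 / ((\<sigma> i)\<^sup>2 + \<alpha>) ^ 3 * (\<sigma> i * x i)\<^sup>2"
        using wt1[OF i a] by (intro mult_nonneg_nonneg) auto
      thus ?thesis using False by (simp only: f2_def if_False)
    qed
  qed
  hence "infsum f1 I + infsum f2 I \<le> (D + 1) * (8 * G \<alpha>)"
  proof -
    assume h: "infsum f2 I \<le> 8 * G \<alpha>"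
    have "infsum f1 I \<le> D * infsum f2 I" using Dc S1 S2 by simp
    hence "infsum f1 I + infsum f2 I \<le> (D + 1) * infsum f2 I" by (simp add: algebra_simps)
    also have "\<dots> \<le> (D + 1) * (8 * G \<alpha>)" using h D by (intro mult_left_mono) auto
    finally show ?thesis .
  qed
  finally have "B \<alpha> \<le> (D + 1) * (8 * G \<alpha>)" .
  thus ?thesis by (simp only: mult_ac)
qed


lemma Nz_MC2: assumes es: "(\<lambda>i. (e i)\<^sup>2) summable_on I" and a: "0 < \<alpha>"
  and mc: "(\<Sum>\<^sub>\<infinity>i\<in>{i\<in>I. (\<sigma> i)\<^sup>2 \<ge> \<alpha>}. \<alpha> / (\<sigma> i)\<^sup>2 * (e i)\<^sup>2)
        \<le> C2 * (\<Sum>\<^sub>\<infinity>i\<in>{i\<in>I. (\<sigma> i)\<^sup>2 \<le> \<alpha>}. (\<sigma> i)\<^sup>2 / \<alpha> * (e i)\<^sup>2)"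
  shows "Nz e \<alpha> \<le> 8 * (1 + max C2 0) * Fe e \<alpha>"
proof -
  define t1 where "t1 i = (if (\<sigma> i)\<^sup>2 \<le> \<alpha> then (\<sigma> i)\<^sup>2 / \<alpha>\<^sup>2 * (e i)\<^sup>2 else 0)" for i
  define t2 where "t2 i = (if (\<sigma> i)\<^sup>2 \<ge> \<alpha> then \<alpha> / (\<sigma> i)\<^sup>2 * (e i)\<^sup>2 else 0)" for i
  define t3 where "t3 i = (if (\<sigma> i)\<^sup>2 \<le> \<alpha> then (\<sigma> i)\<^sup>2 / \<alpha> * (e i)\<^sup>2 else 0)" for i
  have b1: "0 \<le> t1 i \<and> t1 i \<le> (1/\<alpha>) * (e i)\<^sup>2" for i
  proof (cases "(\<sigma> i)\<^sup>2 \<le> \<alpha>")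
    case True
    have "(\<sigma> i)\<^sup>2 / \<alpha>\<^sup>2 \<le> \<alpha> / \<alpha>\<^sup>2" using True a by (intro divide_right_mono) auto
    also have "\<alpha> / \<alpha>\<^sup>2 = 1/\<alpha>" by (simp add: power2_eq_square)
    finally have "(\<sigma> i)\<^sup>2 / \<alpha>\<^sup>2 * (e i)\<^sup>2 \<le> (1/\<alpha>) * (e i)\<^sup>2" by (intro mult_right_mono) auto
    thus ?thesis using True by (simp add: t1_def)
  qed (use a in \<open>simp add: t1_def\<close>)
  have b2: "0 \<le> t2 i \<and> t2 i \<le> (e i)\<^sup>2" for i
  proof (cases "(\<sigma> i)\<^sup>2 \<ge> \<alpha>")
    case True
    hence q: "\<alpha> / (\<sigma> i)\<^sup>2 \<le> 1" using a by (auto simp: divide_le_eq_1)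
    have "\<alpha> / (\<sigma> i)\<^sup>2 * (e i)\<^sup>2 \<le> 1 * (e i)\<^sup>2" using q by (intro mult_right_mono) auto
    thus ?thesis using True a by (simp add: t2_def)
  qed (simp add: t2_def)
  have b3: "0 \<le> t3 i \<and> t3 i \<le> (e i)\<^sup>2" for i
  proof (cases "(\<sigma> i)\<^sup>2 \<le> \<alpha>")
    case True
    hence q: "(\<sigma> i)\<^sup>2 / \<alpha> \<le> 1" using a by (auto simp: divide_le_eq_1)
    have "(\<sigma> i)\<^sup>2 / \<alpha> * (e i)\<^sup>2 \<le> 1 * (e i)\<^sup>2" using q by (intro mult_right_mono) auto
    thus ?thesis using True a by (simp add: t3_def)
  qed (simp add: t3_def)
  have s1: "t1 summable_on I" by (rule isum_le(1)[OF summable_on_cmult_right[OF es, of "1/\<alpha>"]]) (use b1 in auto)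
  have s2: "t2 summable_on I" by (rule isum_le(1)[OF es]) (use b2 in auto)
  have s3: "t3 summable_on I" by (rule isum_le(1)[OF es]) (use b3 in auto)
  have T2: "infsum t2 I = (\<Sum>\<^sub>\<infinity>i\<in>{i\<in>I. (\<sigma> i)\<^sup>2 \<ge> \<alpha>}. \<alpha> / (\<sigma> i)\<^sup>2 * (e i)\<^sup>2)"
    unfolding t2_def by (simp only: isum_restr)
  have T3: "infsum t3 I = (\<Sum>\<^sub>\<infinity>i\<in>{i\<in>I. (\<sigma> i)\<^sup>2 \<le> \<alpha>}. (\<sigma> i)\<^sup>2 / \<alpha> * (e i)\<^sup>2)"
    unfolding t3_def by (simp only: isum_restr)
  have T31: "infsum t3 I = \<alpha> * infsum t1 I"
  proof -
    have "t3 = (\<lambda>i. \<alpha> * t1 i)" using a by (auto simp: t1_def t3_def power2_eq_square)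
    hence "infsum t3 I = infsum (\<lambda>i. \<alpha> * t1 i) I" by simp
    also have "\<dots> = \<alpha> * infsum t1 I" by (rule isum_cmult(1)[OF s1])
    finally show ?thesis .
  qed
  have T1nn: "infsum t1 I \<ge> 0" by (rule infsum_nonneg) (use b1 in auto)
  have "Nz e \<alpha> \<le> infsum t1 I + infsum (\<lambda>i. (1/\<alpha>) * t2 i) I" unfolding Nz_def
  proof (rule isum_le2(2)[OF s1 summable_on_cmult_right[OF s2]])
    fix i assume i: "i \<in> I"
    have l: "(\<sigma> i)\<^sup>2 > 0" using sp[OF i] by simp
    show "0 \<le> (\<sigma> i)\<^sup>2 / ((\<sigma> i)\<^sup>2 + \<alpha>)\<^sup>2 * (e i)\<^sup>2" by simp
    show "(\<sigma> i)\<^sup>2 / ((\<sigma> i)\<^sup>2 + \<alpha>)\<^sup>2 * (e i)\<^sup>2 \<le> t1 i + 1 / \<alpha> * t2 i"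
    proof (cases "(\<sigma> i)\<^sup>2 \<le> \<alpha>")
      case True
      have A: "(\<sigma> i)\<^sup>2 / ((\<sigma> i)\<^sup>2 + \<alpha>)\<^sup>2 * (e i)\<^sup>2 \<le> (\<sigma> i)\<^sup>2 / \<alpha>\<^sup>2 * (e i)\<^sup>2"
        using l a by (intro mult_right_mono hA) auto
      have Bn: "0 \<le> 1 / \<alpha> * t2 i" using b2[of i] a by simp
      have t1eq: "t1 i = (\<sigma> i)\<^sup>2 / \<alpha>\<^sup>2 * (e i)\<^sup>2" using True by (simp add: t1_def)
      show ?thesis using A Bn t1eq by linarith
    next
      case False
      have "(\<sigma> i)\<^sup>2 / ((\<sigma> i)\<^sup>2 + \<alpha>)\<^sup>2 * (e i)\<^sup>2 \<le> 1 / (\<sigma> i)\<^sup>2 * (e i)\<^sup>2"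
        using l a by (intro mult_right_mono hB) auto
      also have "1 / (\<sigma> i)\<^sup>2 * (e i)\<^sup>2 = 1 / \<alpha> * (\<alpha> / (\<sigma> i)\<^sup>2 * (e i)\<^sup>2)" using a by simp
      finally show ?thesis using False by (simp add: t1_def t2_def)
    qed
  qed
  also have "infsum (\<lambda>i. (1/\<alpha>) * t2 i) I = (1/\<alpha>) * infsum t2 I" by (rule isum_cmult(1)[OF s2])
  also have "(1/\<alpha>) * infsum t2 I \<le> (1/\<alpha>) * (C2 * (\<alpha> * infsum t1 I))"
    using mc T2 T3 T31 a by (intro mult_left_mono) auto
  also have "(1/\<alpha>) * (C2 * (\<alpha> * infsum t1 I)) = C2 * infsum t1 I" using a by simp
  also have "C2 * infsum t1 I \<le> max C2 0 * infsum t1 I" using T1nn by (intro mult_right_mono) auto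
  finally have "Nz e \<alpha> \<le> (1 + max C2 0) * infsum t1 I" by (simp add: algebra_simps)
  also have "infsum t1 I \<le> 8 * Fe e \<alpha>" unfolding Fe_def
  proof (rule isum_c[OF sFe[OF es a]])
    fix i assume i: "i \<in> I"
    have l: "(\<sigma> i)\<^sup>2 > 0" using sp[OF i] by simp
    show "0 \<le> t1 i" using b1 by simp
    show "t1 i \<le> 8 * (\<alpha> * (\<sigma> i)\<^sup>2 / ((\<sigma> i)\<^sup>2 + \<alpha>) ^ 3 * (e i)\<^sup>2)"
    proof (cases "(\<sigma> i)\<^sup>2 \<le> \<alpha>")
      case True
      have "(\<sigma> i)\<^sup>2 / \<alpha>\<^sup>2 * (e i)\<^sup>2 \<le> (8 * (\<alpha> * (\<sigma> i)\<^sup>2 / ((\<sigma> i)\<^sup>2 + \<alpha>) ^ 3)) * (e i)\<^sup>2"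
        using True l by (intro mult_right_mono pw_low) auto
      thus ?thesis using True by (simp add: t1_def mult_ac)
    next
      case False
      have "0 \<le> \<alpha> * (\<sigma> i)\<^sup>2 / ((\<sigma> i)\<^sup>2 + \<alpha>) ^ 3 * (e i)\<^sup>2"
        using wt1[OF i a] by (intro mult_nonneg_nonneg) auto
      thus ?thesis using False by (simp only: t1_def if_False)
    qed
  qed
  hence "(1 + max C2 0) * infsum t1 I \<le> (1 + max C2 0) * (8 * Fe e \<alpha>)" by (intro mult_left_mono) auto
  finally show ?thesis by (simp only: mult_ac)
qed

end

context rdata begin

definition "Kc = 16 * (1 + max C2 0)"
definition "c2 = (2 * c3 + 1/2) / n0"
definition "c5 = 2 * c2 * (2 * X + 1) + 1/2"
definition "c7 = 2 * Kc * (4 * c2 * X + 2 * c3) + 2 * c3"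
definition "K1 = c7 + 1/2 + 2 * c3 * (c5 / g0) powr (2*m)"
definition "K2 D = c7 + 1/2 + 16 * (D + 1) * c5"

lemma X_nn: "X \<ge> 0" unfolding X_def by (rule infsum_nonneg) simp
lemma c2_nn: "c2 \<ge> 0" using c3_nn n0_pos by (simp add: c2_def)
lemma c5_nn: "c5 \<ge> 0" using c2_nn X_nn by (simp add: c5_def)
lemma Kc_nn: "Kc \<ge> 0" by (simp add: Kc_def)
lemma c7_nn: "c7 \<ge> 0" using Kc_nn c2_nn X_nn c3_nn by (simp add: c7_def)

lemma core:
  assumes es: "(\<lambda>i. (e i)\<^sup>2) summable_on I" and S: "(\<Sum>\<^sub>\<infinity>i\<in>I. (e i)\<^sup>2) \<le> \<delta>\<^sup>2"
    and b: "0 < b" "b \<le> \<alpha>max" and a: "0 < a" "a \<le> \<alpha>max"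
    and rho: "0 < \<rho>" "\<rho> \<le> 1" and brho: "b powr (2*m) \<le> \<rho>" and drho: "\<delta>\<^sup>2 / b \<le> \<rho>"
    and e0: "\<bar>e i0\<bar> \<le> \<bar>\<sigma> i0 * x i0\<bar> / 2"
    and small: "2 * c2 * Kc * \<rho> \<le> 1/2"
    and minim: "F e a / N e a \<le> F e b / N e b"
    and mc: "(\<Sum>\<^sub>\<infinity>i\<in>{i\<in>I. (\<sigma> i)\<^sup>2 \<ge> a}. a / (\<sigma> i)\<^sup>2 * (e i)\<^sup>2)
        \<le> C2 * (\<Sum>\<^sub>\<infinity>i\<in>{i\<in>I. (\<sigma> i)\<^sup>2 \<le> a}. (\<sigma> i)\<^sup>2 / a * (e i)\<^sup>2)"
  shows "E e a \<le> K1 * \<rho> powr (2*m)"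
    and "\<And>D. D \<ge> 0 \<Longrightarrow> (\<Sum>\<^sub>\<infinity>i\<in>{i\<in>I. (\<sigma> i)\<^sup>2 \<le> a}. (x i)\<^sup>2) \<le> D * (\<Sum>\<^sub>\<infinity>i\<in>{i\<in>I. (\<sigma> i)\<^sup>2 \<ge> a}. a / (\<sigma> i)\<^sup>2 * (x i)\<^sup>2)
         \<Longrightarrow> E e a \<le> K2 D * \<rho>"
proof -
  define Se where "Se = (\<Sum>\<^sub>\<infinity>i\<in>I. (e i)\<^sup>2)"
  have Se: "0 \<le> Se" "Se \<le> \<delta>\<^sup>2" using S unfolding Se_def by (auto intro: infsum_nonneg)
  have rho_pow: "\<rho> \<le> \<rho> powr (2*m)"
  proof -
    have "\<rho> powr 1 \<le> \<rho> powr (2*m)" using rho mpos by (intro powr_mono') auto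
    thus ?thesis using rho by simp
  qed
  have Nb: "n0 \<le> N e b" by (rule N_ge[OF es b e0])
  have Na: "n0 \<le> N e a" by (rule N_ge[OF es a e0])
  have Fb: "F e b \<le> (2 * c3 + 1/2) * \<rho>"
  proof -
    have "F e b \<le> 2 * G b + 2 * Fe e b" by (rule F_le[OF es b(1)])
    also have "G b \<le> c3 * \<rho>" using G_pw[OF b(1)] brho c3_nn by (meson mult_left_mono order_trans)
    also have "Fe e b \<le> 1/(4*b) * Se" using Fe_le[OF es b(1)] by (simp add: Se_def)
    also have "1/(4*b) * Se \<le> \<rho> / 4"
    proof -
      have "1/(4*b) * Se \<le> 1/(4*b) * \<delta>\<^sup>2" using Se b by (intro mult_left_mono) auto
      also have "\<dots> = (\<delta>\<^sup>2 / b) / 4" by simp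
      also have "\<dots> \<le> \<rho> / 4" using drho by simp
      finally show ?thesis .
    qed
    finally show ?thesis by (simp add: algebra_simps)
  qed
  have Fnn: "0 \<le> F e \<alpha>" if "0 < \<alpha>" for \<alpha> unfolding F_def
    using wt1 that by (intro infsum_nonneg mult_nonneg_nonneg) auto
  have Gnn: "0 \<le> G \<alpha>" if "0 < \<alpha>" for \<alpha> unfolding G_def
    using wt1 that by (intro infsum_nonneg mult_nonneg_nonneg) auto
  have Nznn: "0 \<le> Nz e \<alpha>" if "0 < \<alpha>" for \<alpha> unfolding Nz_def
    using wt2 that by (intro infsum_nonneg mult_nonneg_nonneg) auto
  have Bnn: "0 \<le> B \<alpha>" if "0 < \<alpha>" for \<alpha> unfolding B_def
    using wt3 that by (intro infsum_nonneg mult_nonneg_nonneg) auto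
  have n0p: "n0 > 0" by (rule n0_pos)
  have rat: "F e b / N e b \<le> c2 * \<rho>"
  proof -
    have "F e b / N e b \<le> F e b / n0" using Nb n0p Fnn[OF b(1)] by (intro divide_left_mono) auto
    also have "\<dots> \<le> (2 * c3 + 1/2) * \<rho> / n0" using Fb n0p by (intro divide_right_mono) auto
    also have "\<dots> = c2 * \<rho>" by (simp add: c2_def)
    finally show ?thesis .
  qed
  have FaN: "F e a \<le> c2 * \<rho> * N e a"
  proof -
    have "F e a / N e a \<le> c2 * \<rho>" using minim rat by linarith
    thus ?thesis using Na n0p by (simp add: divide_le_eq mult_ac)
  qed
  have Fa1: "F e a \<le> c2 * \<rho> * (2 * X + 2 * Nz e a)"
  proof -
    have "c2 * \<rho> * N e a \<le> c2 * \<rho> * (2 * X + 2 * Nz e a)"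
      using N_le[OF es a(1)] c2_nn rho by (intro mult_left_mono) auto
    thus ?thesis using FaN by linarith
  qed
  have c2r: "0 \<le> c2 * \<rho>" using c2_nn rho by simp
  have main: "(b \<le> a \<longrightarrow> Nz e a \<le> \<rho>/4 \<and> G a \<le> c5 * \<rho>) \<and> (a < b \<longrightarrow> E e a \<le> c7 * \<rho>)"
  proof (intro conjI impI)
    assume ba: "b \<le> a"
    have q: "1/(4*a) * Se \<le> \<rho>/4"
    proof -
      have "1/(4*a) * Se \<le> 1/(4*b) * \<delta>\<^sup>2"
        using Se b ba by (intro mult_mono divide_left_mono) auto
      also have "\<dots> = (\<delta>\<^sup>2 / b) / 4" by simp
      also have "\<dots> \<le> \<rho> / 4" using drho by simp
      finally show ?thesis .
    qed
    show Nza: "Nz e a \<le> \<rho>/4" using Nz_le[OF es a(1)] q by (simp add: Se_def)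
    have Fea: "Fe e a \<le> \<rho>/4" using Fe_le[OF es a(1)] q by (simp add: Se_def)
    have "F e a \<le> c2 * \<rho> * (2 * X + 2 * (\<rho>/4))"
      using Fa1 Nza c2r by (meson add_left_mono mult_left_mono order_trans mult_left_mono[of _ _ 2] zero_le_numeral)
    also have "\<dots> \<le> c2 * \<rho> * (2 * X + 1)" using rho c2r by (intro mult_left_mono) auto
    finally have Fa: "F e a \<le> c2 * \<rho> * (2 * X + 1)" .
    have "G a \<le> 2 * F e a + 2 * Fe e a" by (rule G_le[OF es a(1)])
    also have "\<dots> \<le> 2 * (c2 * \<rho> * (2 * X + 1)) + 2 * (\<rho>/4)" using Fa Fea by linarith
    also have "\<dots> = c5 * \<rho>" by (simp add: c5_def algebra_simps)
    finally show "G a \<le> c5 * \<rho>" .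
  next
    assume ab: "a < b"
    have am: "a powr (2*m) \<le> \<rho>"
      using powr_mono2[of "2*m" a b] ab a mpos brho by linarith
    have Ba: "B a \<le> c3 * \<rho>" using B_pw[OF a(1)] am c3_nn by (meson mult_left_mono order_trans)
    have Ga: "G a \<le> c3 * \<rho>" using G_pw[OF a(1)] am c3_nn by (meson mult_left_mono order_trans)
    have Nza: "Nz e a \<le> Kc * (F e a + G a)"
    proof -
      have "Nz e a \<le> 8 * (1 + max C2 0) * Fe e a" by (rule Nz_MC2[OF es a(1) mc])
      also have "\<dots> \<le> 8 * (1 + max C2 0) * (2 * F e a + 2 * G a)"
        using Fe_le2[OF es a(1)] by (intro mult_left_mono) auto
      also have "\<dots> = Kc * (F e a + G a)" by (simp add: Kc_def algebra_simps)
      finally show ?thesis .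
    qed
    have "F e a \<le> c2 * \<rho> * (2 * X + 2 * (Kc * (F e a + G a)))"
      using Fa1 Nza c2r by (meson add_left_mono mult_left_mono order_trans mult_left_mono[of _ _ 2] zero_le_numeral)
    also have "\<dots> = 2 * c2 * \<rho> * X + (2 * c2 * Kc * \<rho>) * F e a + (2 * c2 * Kc * \<rho>) * G a"
      by (simp add: algebra_simps)
    also have "(2 * c2 * Kc * \<rho>) * F e a \<le> (1/2) * F e a" using small Fnn[OF a(1)] by (rule mult_right_mono)
    also have "(2 * c2 * Kc * \<rho>) * G a \<le> (1/2) * G a" using small Gnn[OF a(1)] by (rule mult_right_mono)
    finally have "F e a \<le> 2 * c2 * \<rho> * X + (1/2) * F e a + (1/2) * G a" by simp
    hence Fa: "F e a \<le> 4 * c2 * \<rho> * X + G a" by linarith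
    have "Nz e a \<le> Kc * (4 * c2 * \<rho> * X + G a + G a)" using Nza Fa Kc_nn
      by (meson add_right_mono mult_left_mono order_trans)
    also have "\<dots> \<le> Kc * (4 * c2 * \<rho> * X + c3 * \<rho> + c3 * \<rho>)" using Ga Kc_nn by (intro mult_left_mono) linarith+
    also have "Kc * (4 * c2 * \<rho> * X + c3 * \<rho> + c3 * \<rho>) = Kc * (4 * c2 * \<rho> * X + 2 * c3 * \<rho>)" by (simp add: algebra_simps)
    finally have Nza2: "Nz e a \<le> Kc * (4 * c2 * \<rho> * X + 2 * c3 * \<rho>)" .
    have "E e a \<le> 2 * Nz e a + 2 * B a" by (rule E_le[OF es a(1)])
    also have "\<dots> \<le> 2 * (Kc * (4 * c2 * \<rho> * X + 2 * c3 * \<rho>)) + 2 * (c3 * \<rho>)" using Nza2 Ba by linarith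
    also have "\<dots> = c7 * \<rho>" by (simp add: c7_def algebra_simps)
    finally show "E e a \<le> c7 * \<rho>" .
  qed
  have rpn: "0 \<le> \<rho> powr (2*m)" by simp
  have c5g: "0 \<le> c5 / g0" using c5_nn g0_pos by simp
  show "E e a \<le> K1 * \<rho> powr (2*m)"
  proof (cases "b \<le> a")
    case True
    have Ga: "G a \<le> c5 * \<rho>" using main True by blast
    have "g0 * a \<le> c5 * \<rho>" using G_ge[OF a] Ga by linarith
    hence aa: "a \<le> (c5 / g0) * \<rho>" using g0_pos by (simp add: field_simps mult.commute)
    have "a powr (2*m) \<le> ((c5 / g0) * \<rho>) powr (2*m)" using aa a mpos by (intro powr_mono2) auto
    also have "\<dots> = (c5 / g0) powr (2*m) * \<rho> powr (2*m)" by (rule powr_mult)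
    finally have apw: "a powr (2*m) \<le> (c5 / g0) powr (2*m) * \<rho> powr (2*m)" .
    have "B a \<le> c3 * a powr (2*m)" by (rule B_pw[OF a(1)])
    also have "\<dots> \<le> c3 * ((c5 / g0) powr (2*m) * \<rho> powr (2*m))" using apw c3_nn by (rule mult_left_mono)
    finally have Ba: "B a \<le> c3 * (c5 / g0) powr (2*m) * \<rho> powr (2*m)" by (simp add: mult_ac)
    have "E e a \<le> 2 * Nz e a + 2 * B a" by (rule E_le[OF es a(1)])
    also have "\<dots> \<le> 2 * (\<rho>/4) + 2 * (c3 * (c5 / g0) powr (2*m) * \<rho> powr (2*m))" using main True Ba by force
    also have "\<dots> \<le> (1/2) * \<rho> powr (2*m) + 2 * c3 * (c5 / g0) powr (2*m) * \<rho> powr (2*m)" using rho_pow by simp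
    also have "\<dots> \<le> K1 * \<rho> powr (2*m)" using c7_nn rpn by (simp add: K1_def algebra_simps)
    finally show ?thesis .
  next
    case False
    hence "E e a \<le> c7 * \<rho>" using main by simp
    also have "\<dots> \<le> c7 * \<rho> powr (2*m)" using rho_pow c7_nn by (rule mult_left_mono)
    also have "\<dots> \<le> K1 * \<rho> powr (2*m)"
      using rpn c3_nn by (intro mult_right_mono) (simp_all add: K1_def)
    finally show ?thesis .
  qed
  fix D assume D: "D \<ge> 0"
    and Dc: "(\<Sum>\<^sub>\<infinity>i\<in>{i\<in>I. (\<sigma> i)\<^sup>2 \<le> a}. (x i)\<^sup>2) \<le> D * (\<Sum>\<^sub>\<infinity>i\<in>{i\<in>I. (\<sigma> i)\<^sup>2 \<ge> a}. a / (\<sigma> i)\<^sup>2 * (x i)\<^sup>2)"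
  show "E e a \<le> K2 D * \<rho>"
  proof (cases "b \<le> a")
    case True
    have Ga: "G a \<le> c5 * \<rho>" using main True by blast
    have "B a \<le> 8 * (D + 1) * G a" by (rule B_le_D[OF a(1) D Dc])
    also have "\<dots> \<le> 8 * (D + 1) * (c5 * \<rho>)" using Ga D by (intro mult_left_mono) auto
    finally have Ba: "B a \<le> 8 * (D + 1) * (c5 * \<rho>)" .
    have "E e a \<le> 2 * Nz e a + 2 * B a" by (rule E_le[OF es a(1)])
    also have "\<dots> \<le> 2 * (\<rho>/4) + 2 * (8 * (D + 1) * (c5 * \<rho>))" using main True Ba by force
    also have "\<dots> \<le> K2 D * \<rho>" using c7_nn rho by (simp add: K2_def algebra_simps)
    finally show ?thesis .
  next
    case False
    hence "E e a \<le> c7 * \<rho>" using main by simp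
    also have "\<dots> \<le> K2 D * \<rho>"
      using rho c5_nn D by (intro mult_right_mono) (simp_all add: K2_def)
    finally show ?thesis .
  qed
qed


lemma real_final:
  "\<exists>C>0. \<exists>\<delta>0>0.
    (\<forall>\<delta> e a. 0 < \<delta> \<and> \<delta> \<le> \<delta>0 \<and> (\<lambda>i. (e i)\<^sup>2) summable_on I \<and> (\<Sum>\<^sub>\<infinity>i\<in>I. (e i)\<^sup>2) \<le> \<delta>\<^sup>2 \<and>
        (\<forall>\<alpha>. 0 < \<alpha> \<and> \<alpha> \<le> \<alpha>max \<longrightarrow>
          (\<Sum>\<^sub>\<infinity>i\<in>{i\<in>I. (\<sigma> i)\<^sup>2 \<ge> \<alpha>}. \<alpha> / (\<sigma> i)\<^sup>2 * (e i)\<^sup>2)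
          \<le> C2 * (\<Sum>\<^sub>\<infinity>i\<in>{i\<in>I. (\<sigma> i)\<^sup>2 \<le> \<alpha>}. (\<sigma> i)\<^sup>2 / \<alpha> * (e i)\<^sup>2)) \<and>
        a \<in> {0<..<\<alpha>max} \<and>
        (\<forall>\<alpha>\<in>{0<..<\<alpha>max}. sqrt (F e a) / sqrt (N e a) \<le> sqrt (F e \<alpha>) / sqrt (N e \<alpha>))
      \<longrightarrow> sqrt (E e a) \<le> C * \<delta> powr (2 * min \<mu> (1/2) / (2 * min \<mu> (1/2) + 1) * (2 * min \<mu> (1/2)))) \<and>
    ((\<exists>D>0. \<forall>\<alpha>\<in>{0<..<\<alpha>max}.
        (\<Sum>\<^sub>\<infinity>i\<in>{i\<in>I. (\<sigma> i)\<^sup>2 \<le> \<alpha>}. (x i)\<^sup>2)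
        \<le> D * (\<Sum>\<^sub>\<infinity>i\<in>{i\<in>I. (\<sigma> i)\<^sup>2 \<ge> \<alpha>}. \<alpha> / (\<sigma> i)\<^sup>2 * (x i)\<^sup>2))
     \<longrightarrow> (\<forall>\<delta> e a. 0 < \<delta> \<and> \<delta> \<le> \<delta>0 \<and> (\<lambda>i. (e i)\<^sup>2) summable_on I \<and> (\<Sum>\<^sub>\<infinity>i\<in>I. (e i)\<^sup>2) \<le> \<delta>\<^sup>2 \<and>
        (\<forall>\<alpha>. 0 < \<alpha> \<and> \<alpha> \<le> \<alpha>max \<longrightarrow>
          (\<Sum>\<^sub>\<infinity>i\<in>{i\<in>I. (\<sigma> i)\<^sup>2 \<ge> \<alpha>}. \<alpha> / (\<sigma> i)\<^sup>2 * (e i)\<^sup>2)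
          \<le> C2 * (\<Sum>\<^sub>\<infinity>i\<in>{i\<in>I. (\<sigma> i)\<^sup>2 \<le> \<alpha>}. (\<sigma> i)\<^sup>2 / \<alpha> * (e i)\<^sup>2)) \<and>
        a \<in> {0<..<\<alpha>max} \<and>
        (\<forall>\<alpha>\<in>{0<..<\<alpha>max}. sqrt (F e a) / sqrt (N e a) \<le> sqrt (F e \<alpha>) / sqrt (N e \<alpha>))
      \<longrightarrow> sqrt (E e a) \<le> C * \<delta> powr (2 * min \<mu> (1/2) / (2 * min \<mu> (1/2) + 1))))"
proof -
  define q1 where "q1 = 4 * m / (2 * m + 1)"
  define q2 where "q2 = 2 / (2 * m + 1)"
  have mm: "0 < m" "m \<le> 1/2" using mpos by auto
  have q1p: "q1 > 0" and q2p: "q2 > 0" using mm by (auto simp: q1_def q2_def)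
  have q12: "q2 * (2 * m) = q1" by (simp add: q1_def q2_def)
  have q21: "2 - q2 = q1" using mm by (simp add: q1_def q2_def field_simps)
  define t where "t = min 1 (1 / (4 * c2 * Kc + 1))"
  have cK: "0 \<le> c2 * Kc" using c2_nn Kc_nn by simp
  have tp: "t > 0" using cK by (simp add: t_def add_nonneg_pos)
  have t1: "t \<le> 1" by (simp add: t_def)
  have tK: "2 * c2 * Kc * t \<le> 1/2"
  proof -
    have "2 * c2 * Kc * t \<le> 2 * c2 * Kc * (1 / (4 * c2 * Kc + 1))" using cK by (intro mult_left_mono) (auto simp: t_def mult.commute)
    also have "\<dots> \<le> 1/2" using cK by (simp add: field_simps)
    finally show ?thesis .
  qed
  define s0 where "s0 = \<bar>\<sigma> i0 * x i0\<bar> / 2"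
  have s0p: "s0 > 0" using x0 sp[OF i0(1)] by (simp add: s0_def)
  define \<delta>0 where "\<delta>0 = min s0 (min (t powr (1/q1)) ((\<alpha>max/2) powr (1/q2)))"
  have d0p: "\<delta>0 > 0" using s0p tp amax by (simp add: \<delta>0_def)
  define P where "P D \<longleftrightarrow> (\<forall>\<alpha>\<in>{0<..<\<alpha>max}.
        (\<Sum>\<^sub>\<infinity>i\<in>{i\<in>I. (\<sigma> i)\<^sup>2 \<le> \<alpha>}. (x i)\<^sup>2)
        \<le> D * (\<Sum>\<^sub>\<infinity>i\<in>{i\<in>I. (\<sigma> i)\<^sup>2 \<ge> \<alpha>}. \<alpha> / (\<sigma> i)\<^sup>2 * (x i)\<^sup>2))" for D
  define D0 where "D0 = (if (\<exists>D>0. P D) then (SOME D. D > 0 \<and> P D) else 1)"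
  have D0p: "D0 > 0"
  proof (cases "\<exists>D>0. P D")
    case True
    from someI_ex[OF True] show ?thesis by (simp add: D0_def True)
  next
    case False
    thus ?thesis by (simp only: D0_def if_False)
  qed
  have D0c: "P D0" if "\<exists>D>0. P D"
    using someI_ex[OF that] by (simp add: D0_def that)
  have K1nn: "K1 \<ge> 0" using c7_nn c3_nn by (simp add: K1_def)
  have K2nn: "K2 D0 \<ge> 0" using c7_nn c5_nn D0p by (simp add: K2_def)
  define C where "C = sqrt K1 + sqrt (K2 D0) + 1"
  have Cp: "C > 0" unfolding C_def by (intro add_nonneg_pos add_nonneg_nonneg real_sqrt_ge_zero K1nn K2nn) simp
  have C1: "sqrt K1 \<le> C" and C2': "sqrt (K2 D0) \<le> C" using K1nn K2nn by (auto simp: C_def)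
  have key: "E e a \<le> K1 * (\<delta> powr q1) powr (2*m) \<and> (P D0 \<longrightarrow> E e a \<le> K2 D0 * \<delta> powr q1)"
    if hyp: "0 < \<delta> \<and> \<delta> \<le> \<delta>0 \<and> (\<lambda>i. (e i)\<^sup>2) summable_on I \<and> (\<Sum>\<^sub>\<infinity>i\<in>I. (e i)\<^sup>2) \<le> \<delta>\<^sup>2 \<and>
        (\<forall>\<alpha>. 0 < \<alpha> \<and> \<alpha> \<le> \<alpha>max \<longrightarrow>
          (\<Sum>\<^sub>\<infinity>i\<in>{i\<in>I. (\<sigma> i)\<^sup>2 \<ge> \<alpha>}. \<alpha> / (\<sigma> i)\<^sup>2 * (e i)\<^sup>2)
          \<le> C2 * (\<Sum>\<^sub>\<infinity>i\<in>{i\<in>I. (\<sigma> i)\<^sup>2 \<le> \<alpha>}. (\<sigma> i)\<^sup>2 / \<alpha> * (e i)\<^sup>2)) \<and>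
        a \<in> {0<..<\<alpha>max} \<and>
        (\<forall>\<alpha>\<in>{0<..<\<alpha>max}. sqrt (F e a) / sqrt (N e a) \<le> sqrt (F e \<alpha>) / sqrt (N e \<alpha>))"
    for \<delta> e a
  proof -
    from hyp have dp: "0 < \<delta>" and dd0: "\<delta> \<le> \<delta>0" and es: "(\<lambda>i. (e i)\<^sup>2) summable_on I"
      and S: "(\<Sum>\<^sub>\<infinity>i\<in>I. (e i)\<^sup>2) \<le> \<delta>\<^sup>2" and a: "0 < a" "a < \<alpha>max"
      and mcall: "\<forall>\<alpha>. 0 < \<alpha> \<and> \<alpha> \<le> \<alpha>max \<longrightarrow>
          (\<Sum>\<^sub>\<infinity>i\<in>{i\<in>I. (\<sigma> i)\<^sup>2 \<ge> \<alpha>}. \<alpha> / (\<sigma> i)\<^sup>2 * (e i)\<^sup>2)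
          \<le> C2 * (\<Sum>\<^sub>\<infinity>i\<in>{i\<in>I. (\<sigma> i)\<^sup>2 \<le> \<alpha>}. (\<sigma> i)\<^sup>2 / \<alpha> * (e i)\<^sup>2)"
      and minall: "\<forall>\<alpha>\<in>{0<..<\<alpha>max}. sqrt (F e a) / sqrt (N e a) \<le> sqrt (F e \<alpha>) / sqrt (N e \<alpha>)"
      by auto
    define b where "b = \<delta> powr q2"
    define \<rho> where "\<rho> = \<delta> powr q1"
    have bp: "0 < b" using dp by (simp add: b_def)
    have rp: "0 < \<rho>" using dp by (simp add: \<rho>_def)
    have "\<delta> \<le> (\<alpha>max/2) powr (1/q2)" using dd0 by (simp add: \<delta>0_def)
    hence "b \<le> ((\<alpha>max/2) powr (1/q2)) powr q2" unfolding b_def using dp q2p by (intro powr_mono2) auto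
    also have "\<dots> = \<alpha>max/2" using q2p amax by (simp add: powr_powr)
    finally have bm: "b < \<alpha>max" using amax by simp
    have "\<delta> \<le> t powr (1/q1)" using dd0 by (simp add: \<delta>0_def)
    hence "\<rho> \<le> (t powr (1/q1)) powr q1" unfolding \<rho>_def using dp q1p by (intro powr_mono2) auto
    also have "\<dots> = t" using q1p tp by (simp add: powr_powr)
    finally have rt: "\<rho> \<le> t" .
    have r1: "\<rho> \<le> 1" using rt t1 by simp
    have "2 * c2 * Kc * \<rho> \<le> 2 * c2 * Kc * t"
      using rt cK by (intro mult_left_mono) (auto simp: mult.commute)
    hence small: "2 * c2 * Kc * \<rho> \<le> 1/2" using tK by linarith
    have brho: "b powr (2*m) \<le> \<rho>" unfolding b_def \<rho>_def using q12 by (simp add: powr_powr)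
    have drho: "\<delta>\<^sup>2 / b \<le> \<rho>"
    proof -
      have "\<delta>\<^sup>2 / b = \<delta> powr 2 / \<delta> powr q2" using dp by (simp add: b_def)
      also have "\<dots> = \<delta> powr (2 - q2)" by (simp add: powr_diff)
      finally show ?thesis using q21 by (simp add: \<rho>_def)
    qed
    have e0: "\<bar>e i0\<bar> \<le> \<bar>\<sigma> i0 * x i0\<bar> / 2"
    proof -
      have "(e i0)\<^sup>2 \<le> (\<Sum>\<^sub>\<infinity>i\<in>I. (e i)\<^sup>2)" by (rule isum_single[OF es _ i0(1)]) simp
      also have "\<dots> \<le> \<delta>\<^sup>2" by (rule S)
      finally have "\<bar>e i0\<bar> \<le> \<delta>" using dp power2_le_imp_le[of "\<bar>e i0\<bar>" \<delta>] by simp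
      also have "\<delta> \<le> s0" using dd0 by (simp add: \<delta>0_def)
      finally show ?thesis by (simp add: s0_def)
    qed
    have minim: "F e a / N e a \<le> F e b / N e b"
    proof -
      have "sqrt (F e a) / sqrt (N e a) \<le> sqrt (F e b) / sqrt (N e b)" using minall bp bm by auto
      hence "sqrt (F e a / N e a) \<le> sqrt (F e b / N e b)" by (simp add: real_sqrt_divide)
      thus ?thesis by simp
    qed
    have mc: "(\<Sum>\<^sub>\<infinity>i\<in>{i\<in>I. (\<sigma> i)\<^sup>2 \<ge> a}. a / (\<sigma> i)\<^sup>2 * (e i)\<^sup>2)
        \<le> C2 * (\<Sum>\<^sub>\<infinity>i\<in>{i\<in>I. (\<sigma> i)\<^sup>2 \<le> a}. (\<sigma> i)\<^sup>2 / a * (e i)\<^sup>2)" using mcall a by auto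
    note cr = core[OF es S bp less_imp_le[OF bm] a(1) less_imp_le[OF a(2)] rp r1 brho drho e0 small minim mc]
    show ?thesis
    proof (intro conjI impI)
      show "E e a \<le> K1 * (\<delta> powr q1) powr (2*m)" using cr(1) by (simp add: \<rho>_def)
      assume "P D0"
      hence "(\<Sum>\<^sub>\<infinity>i\<in>{i\<in>I. (\<sigma> i)\<^sup>2 \<le> a}. (x i)\<^sup>2) \<le> D0 * (\<Sum>\<^sub>\<infinity>i\<in>{i\<in>I. (\<sigma> i)\<^sup>2 \<ge> a}. a / (\<sigma> i)\<^sup>2 * (x i)\<^sup>2)"
        using a by (auto simp: P_def)
      from cr(2)[OF less_imp_le[OF D0p] this] show "E e a \<le> K2 D0 * \<delta> powr q1" by (simp add: \<rho>_def)
    qed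
  qed
  have mdef: "min \<mu> (1/2) = m" by (simp add: m_def)
  have ex1: "q1 * (2*m) / 2 = 2 * m / (2 * m + 1) * (2 * m)" using mm by (simp add: q1_def field_simps)
  have ex2: "q1 / 2 = 2 * m / (2 * m + 1)" using mm by (simp add: q1_def field_simps)
  have sqpow: "sqrt (\<delta> powr c) = \<delta> powr (c/2)" if "0 < \<delta>" for \<delta> c :: real
    using powr_half_sqrt_powr[of \<delta> c] that by simp
  have part1: "sqrt (E e a) \<le> C * \<delta> powr (2 * m / (2 * m + 1) * (2 * m))" if hyp: "0 < \<delta> \<and> \<delta> \<le> \<delta>0 \<and> (\<lambda>i. (e i)\<^sup>2) summable_on I \<and> (\<Sum>\<^sub>\<infinity>i\<in>I. (e i)\<^sup>2) \<le> \<delta>\<^sup>2 \<and>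
        (\<forall>\<alpha>. 0 < \<alpha> \<and> \<alpha> \<le> \<alpha>max \<longrightarrow>
          (\<Sum>\<^sub>\<infinity>i\<in>{i\<in>I. (\<sigma> i)\<^sup>2 \<ge> \<alpha>}. \<alpha> / (\<sigma> i)\<^sup>2 * (e i)\<^sup>2)
          \<le> C2 * (\<Sum>\<^sub>\<infinity>i\<in>{i\<in>I. (\<sigma> i)\<^sup>2 \<le> \<alpha>}. (\<sigma> i)\<^sup>2 / \<alpha> * (e i)\<^sup>2)) \<and>
        a \<in> {0<..<\<alpha>max} \<and>
        (\<forall>\<alpha>\<in>{0<..<\<alpha>max}. sqrt (F e a) / sqrt (N e a) \<le> sqrt (F e \<alpha>) / sqrt (N e \<alpha>))"
    for \<delta> e a
  proof -
    have dp: "0 < \<delta>" using hyp by simp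
    have "sqrt (E e a) \<le> sqrt (K1 * (\<delta> powr q1) powr (2*m))" using key[OF hyp] by simp
    also have "\<dots> = sqrt K1 * \<delta> powr (2 * m / (2 * m + 1) * (2 * m))"
      using dp by (simp add: real_sqrt_mult powr_powr sqpow ex1)
    also have "\<dots> \<le> C * \<delta> powr (2 * m / (2 * m + 1) * (2 * m))" using C1 by (intro mult_right_mono) auto
    finally show "sqrt (E e a) \<le> C * \<delta> powr (2 * m / (2 * m + 1) * (2 * m))" .
  qed
  have part2: "sqrt (E e a) \<le> C * \<delta> powr (2 * m / (2 * m + 1))" if exD: "\<exists>D>0. \<forall>\<alpha>\<in>{0<..<\<alpha>max}.
        (\<Sum>\<^sub>\<infinity>i\<in>{i\<in>I. (\<sigma> i)\<^sup>2 \<le> \<alpha>}. (x i)\<^sup>2)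
        \<le> D * (\<Sum>\<^sub>\<infinity>i\<in>{i\<in>I. (\<sigma> i)\<^sup>2 \<ge> \<alpha>}. \<alpha> / (\<sigma> i)\<^sup>2 * (x i)\<^sup>2)"
    and hyp: "0 < \<delta> \<and> \<delta> \<le> \<delta>0 \<and> (\<lambda>i. (e i)\<^sup>2) summable_on I \<and> (\<Sum>\<^sub>\<infinity>i\<in>I. (e i)\<^sup>2) \<le> \<delta>\<^sup>2 \<and>
        (\<forall>\<alpha>. 0 < \<alpha> \<and> \<alpha> \<le> \<alpha>max \<longrightarrow>
          (\<Sum>\<^sub>\<infinity>i\<in>{i\<in>I. (\<sigma> i)\<^sup>2 \<ge> \<alpha>}. \<alpha> / (\<sigma> i)\<^sup>2 * (e i)\<^sup>2)
          \<le> C2 * (\<Sum>\<^sub>\<infinity>i\<in>{i\<in>I. (\<sigma> i)\<^sup>2 \<le> \<alpha>}. (\<sigma> i)\<^sup>2 / \<alpha> * (e i)\<^sup>2)) \<and>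
        a \<in> {0<..<\<alpha>max} \<and>
        (\<forall>\<alpha>\<in>{0<..<\<alpha>max}. sqrt (F e a) / sqrt (N e a) \<le> sqrt (F e \<alpha>) / sqrt (N e \<alpha>))"
    for \<delta> e a
  proof -
    have dp: "0 < \<delta>" using hyp by simp
    have PD: "P D0" by (rule D0c) (use exD in \<open>simp add: P_def\<close>)
    have "sqrt (E e a) \<le> sqrt (K2 D0 * \<delta> powr q1)" using key[OF hyp] PD by simp
    also have "\<dots> = sqrt (K2 D0) * \<delta> powr (2 * m / (2 * m + 1))"
      using dp by (simp add: real_sqrt_mult sqpow ex2)
    also have "\<dots> \<le> C * \<delta> powr (2 * m / (2 * m + 1))" using C2' by (intro mult_right_mono) auto
    finally show "sqrt (E e a) \<le> C * \<delta> powr (2 * m / (2 * m + 1))" .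
  qed
  show ?thesis unfolding mdef
    apply (rule exI[of _ C], rule conjI[OF Cp], rule exI[of _ \<delta>0], rule conjI[OF d0p])
    apply (intro conjI allI impI)
    subgoal for \<delta> e a by (rule part1)
    subgoal for \<delta> e a by (rule part2)
    done
qed

end

theorem mainTheorem9:
  fixes A :: "'a::{real_inner,complete_space} \<Rightarrow> 'b::{real_inner,complete_space}"
    and I :: "nat set" and \<sigma> :: "nat \<Rightarrow> real" and u :: "nat \<Rightarrow> 'a" and v :: "nat \<Rightarrow> 'b"
    and xd :: 'a and \<omega> :: 'a and \<mu> Cs C2 \<alpha>max :: real
  assumes cpt: "compact_op A"
    and sys: "singular_system A I \<sigma> u v"
    and amax: "\<alpha>max > 0"
    and xd_perp: "xd \<in> orthogonal_comp {x. A x = 0}"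
    and xd_nz: "xd \<noteq> 0"
    and src: "xd = AstarA_pow I \<sigma> u \<mu> \<omega>"
    and wbd: "norm \<omega> \<le> Cs"
    and mu: "0 < \<mu>" "\<mu> \<le> 1"
  shows "\<exists>C>0. \<exists>\<delta>0>0.
    (\<forall>\<delta> e \<alpha>s. 0 < \<delta> \<and> \<delta> \<le> \<delta>0 \<and> norm e \<le> \<delta> \<and> MC2 C2 I \<sigma> v \<alpha>max e \<and>
        \<alpha>s \<in> {0<..<\<alpha>max} \<and>
        (\<forall>\<alpha>\<in>{0<..<\<alpha>max}. psiSLR A I \<sigma> v (A xd + e) \<alpha>s \<le> psiSLR A I \<sigma> v (A xd + e) \<alpha>)
      \<longrightarrow> norm (tikh A \<alpha>s (A xd + e) - xd)
          \<le> C * \<delta> powr (2 * min \<mu> (1/2) / (2 * min \<mu> (1/2) + 1) * (2 * min \<mu> (1/2)))) \<and>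
    ((\<exists>D>0. \<forall>\<alpha>\<in>{0<..<\<alpha>max}.
        (\<Sum>\<^sub>\<infinity>i\<in>{i\<in>I. (\<sigma> i)\<^sup>2 \<le> \<alpha>}. (inner xd (u i))\<^sup>2)
        \<le> D * (\<Sum>\<^sub>\<infinity>i\<in>{i\<in>I. (\<sigma> i)\<^sup>2 \<ge> \<alpha>}. \<alpha> / (\<sigma> i)\<^sup>2 * (inner xd (u i))\<^sup>2))
     \<longrightarrow> (\<forall>\<delta> e \<alpha>s. 0 < \<delta> \<and> \<delta> \<le> \<delta>0 \<and> norm e \<le> \<delta> \<and> MC2 C2 I \<sigma> v \<alpha>max e \<and>
        \<alpha>s \<in> {0<..<\<alpha>max} \<and>
        (\<forall>\<alpha>\<in>{0<..<\<alpha>max}. psiSLR A I \<sigma> v (A xd + e) \<alpha>s \<le> psiSLR A I \<sigma> v (A xd + e) \<alpha>)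
      \<longrightarrow> norm (tikh A \<alpha>s (A xd + e) - xd)
          \<le> C * \<delta> powr (2 * min \<mu> (1/2) / (2 * min \<mu> (1/2) + 1))))"
proof -
  interpret S: sv A I \<sigma> u v using cpt sys by (rule sv.intro)
  obtain K where K: "K > 0" "\<And>i. i \<in> I \<Longrightarrow> \<sigma> i \<le> K" using S.sig_bound by blast
  define \<Lambda> where "\<Lambda> = K\<^sup>2"
  define w where "w i = inner \<omega> (u i)" for i
  have ws: "(\<lambda>i. (w i)\<^sup>2) summable_on I" unfolding w_def by (rule bessel(1)[OF S.onu])
  have Lb: "(\<sigma> i)\<^sup>2 \<le> \<Lambda>" if "i \<in> I" for i
    unfolding \<Lambda>_def using K(2)[OF that] S.sig_pos[OF that] by (intro power_mono) auto
  have xd_eq: "xd = (\<Sum>\<^sub>\<infinity>i\<in>I. (((\<sigma> i)\<^sup>2) powr \<mu> * w i) *\<^sub>R u i)"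
    using src by (simp add: AstarA_pow_def w_def)
  obtain i0 where i0: "i0 \<in> I" "w i0 \<noteq> 0"
  proof (rule ccontr)
    assume "\<not> thesis"
    hence "\<forall>i\<in>I. w i = 0" using that by blast
    hence "xd = (\<Sum>\<^sub>\<infinity>i\<in>I. (0::'a))" unfolding xd_eq by (intro infsum_cong) simp
    thus False using xd_nz by simp
  qed
  interpret R: rdata I \<sigma> w \<mu> \<Lambda> \<alpha>max C2 i0
    by (unfold_locales) (use S.sig_pos Lb amax mu ws i0 in auto)
  have xs: "(\<lambda>i. (R.x i)\<^sup>2) summable_on I" by (rule R.sX)
  have xd_x: "xd = (\<Sum>\<^sub>\<infinity>i\<in>I. R.x i *\<^sub>R u i)" unfolding xd_eq R.x_def by simp
  have xcoef: "inner xd (u i) = R.x i" if "i \<in> I" for i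
    unfolding xd_x by (rule os_coeff[OF S.onu xs that])
  have dat: "inner (A xd + e) (v i) = R.d (\<lambda>i. inner e (v i)) i" if "i \<in> I" for e i
    using S.A_inner_v[OF that, of xd] xcoef[OF that] by (simp add: inner_add_left R.d_def)
  have psiSL_eq: "psiSL I \<sigma> v (A xd + e) \<alpha> = sqrt (R.F (\<lambda>i. inner e (v i)) \<alpha>)" for e \<alpha>
    unfolding psiSL_def R.F_def by (intro arg_cong[where f=sqrt] infsum_cong) (simp add: dat)
  have norm_tikh: "norm (tikh A \<alpha> (A xd + e)) = sqrt (R.N (\<lambda>i. inner e (v i)) \<alpha>)" if "0 < \<alpha>" for e \<alpha>
  proof -
    have "(norm (tikh A \<alpha> (A xd + e)))\<^sup>2 = R.N (\<lambda>i. inner e (v i)) \<alpha>"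
      unfolding S.tikh_norm2[OF that] R.N_def by (intro infsum_cong) (simp add: dat)
    thus ?thesis by (metis norm_ge_zero real_sqrt_abs real_sqrt_unique abs_of_nonneg)
  qed
  have psiSLR_eq: "psiSLR A I \<sigma> v (A xd + e) \<alpha> = sqrt (R.F (\<lambda>i. inner e (v i)) \<alpha>) / sqrt (R.N (\<lambda>i. inner e (v i)) \<alpha>)"
    if "0 < \<alpha>" for e \<alpha>
    unfolding psiSLR_def psiSL_eq norm_tikh[OF that] ..
  have es: "(\<lambda>i. (inner e (v i))\<^sup>2) summable_on I" for e by (rule bessel(1)[OF S.onv])
  have eS: "(\<Sum>\<^sub>\<infinity>i\<in>I. (inner e (v i))\<^sup>2) \<le> (norm e)\<^sup>2" for e by (rule bessel(2)[OF S.onv])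
  have err: "norm (tikh A \<alpha> (A xd + e) - xd) = sqrt (R.E (\<lambda>i. inner e (v i)) \<alpha>)" if a: "0 < \<alpha>" for e \<alpha>
  proof -
    let ?y = "A xd + e"
    have tc: "S.tcoef \<alpha> ?y i - R.x i = \<sigma> i * R.d (\<lambda>i. inner e (v i)) i / ((\<sigma> i)\<^sup>2 + \<alpha>) - R.x i" if "i \<in> I" for i
      using dat[OF that] by (simp add: S.tcoef_def)
    have sE: "(\<lambda>i. (S.tcoef \<alpha> ?y i - R.x i)\<^sup>2) summable_on I"
      using R.sE[OF es a, of e] by (subst summable_on_cong[where g="\<lambda>i. (\<sigma> i * R.d (\<lambda>i. inner e (v i)) i / ((\<sigma> i)\<^sup>2 + \<alpha>) - R.x i)\<^sup>2"]) (simp_all add: tc)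
    have "tikh A \<alpha> ?y - xd = (\<Sum>\<^sub>\<infinity>i\<in>I. (S.tcoef \<alpha> ?y i - R.x i) *\<^sub>R u i)"
      unfolding S.tikh_eq[OF a] xd_x by (rule os_diff[OF S.onu S.tcoef_summable[OF a] xs])
    hence "(norm (tikh A \<alpha> ?y - xd))\<^sup>2 = (\<Sum>\<^sub>\<infinity>i\<in>I. (S.tcoef \<alpha> ?y i - R.x i)\<^sup>2)"
      using os_norm2[OF S.onu sE] by simp
    also have "\<dots> = R.E (\<lambda>i. inner e (v i)) \<alpha>" unfolding R.E_def by (intro infsum_cong) (simp add: tc)
    finally show ?thesis by (metis norm_ge_zero real_sqrt_abs real_sqrt_unique abs_of_nonneg)
  qed
  obtain C \<delta>0 where RF1: "(\<forall>\<delta> e a. 0 < \<delta> \<and> \<delta> \<le> \<delta>0 \<and> (\<lambda>i. (e i)\<^sup>2) summable_on I \<and> (\<Sum>\<^sub>\<infinity>i\<in>I. (e i)\<^sup>2) \<le> \<delta>\<^sup>2 \<and>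
        (\<forall>\<alpha>. 0 < \<alpha> \<and> \<alpha> \<le> \<alpha>max \<longrightarrow>
          (\<Sum>\<^sub>\<infinity>i\<in>{i\<in>I. (\<sigma> i)\<^sup>2 \<ge> \<alpha>}. \<alpha> / (\<sigma> i)\<^sup>2 * (e i)\<^sup>2)
          \<le> C2 * (\<Sum>\<^sub>\<infinity>i\<in>{i\<in>I. (\<sigma> i)\<^sup>2 \<le> \<alpha>}. (\<sigma> i)\<^sup>2 / \<alpha> * (e i)\<^sup>2)) \<and>
        a \<in> {0<..<\<alpha>max} \<and>
        (\<forall>\<alpha>\<in>{0<..<\<alpha>max}. sqrt (R.F e a) / sqrt (R.N e a) \<le> sqrt (R.F e \<alpha>) / sqrt (R.N e \<alpha>))
      \<longrightarrow> sqrt (R.E e a) \<le> C * \<delta> powr (2 * min \<mu> (1/2) / (2 * min \<mu> (1/2) + 1) * (2 * min \<mu> (1/2))))"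
    and RF2: "((\<exists>D>0. \<forall>\<alpha>\<in>{0<..<\<alpha>max}.
        (\<Sum>\<^sub>\<infinity>i\<in>{i\<in>I. (\<sigma> i)\<^sup>2 \<le> \<alpha>}. (R.x i)\<^sup>2)
        \<le> D * (\<Sum>\<^sub>\<infinity>i\<in>{i\<in>I. (\<sigma> i)\<^sup>2 \<ge> \<alpha>}. \<alpha> / (\<sigma> i)\<^sup>2 * (R.x i)\<^sup>2))
     \<longrightarrow> (\<forall>\<delta> e a. 0 < \<delta> \<and> \<delta> \<le> \<delta>0 \<and> (\<lambda>i. (e i)\<^sup>2) summable_on I \<and> (\<Sum>\<^sub>\<infinity>i\<in>I. (e i)\<^sup>2) \<le> \<delta>\<^sup>2 \<and>
        (\<forall>\<alpha>. 0 < \<alpha> \<and> \<alpha> \<le> \<alpha>max \<longrightarrow>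
          (\<Sum>\<^sub>\<infinity>i\<in>{i\<in>I. (\<sigma> i)\<^sup>2 \<ge> \<alpha>}. \<alpha> / (\<sigma> i)\<^sup>2 * (e i)\<^sup>2)
          \<le> C2 * (\<Sum>\<^sub>\<infinity>i\<in>{i\<in>I. (\<sigma> i)\<^sup>2 \<le> \<alpha>}. (\<sigma> i)\<^sup>2 / \<alpha> * (e i)\<^sup>2)) \<and>
        a \<in> {0<..<\<alpha>max} \<and>
        (\<forall>\<alpha>\<in>{0<..<\<alpha>max}. sqrt (R.F e a) / sqrt (R.N e a) \<le> sqrt (R.F e \<alpha>) / sqrt (R.N e \<alpha>))
      \<longrightarrow> sqrt (R.E e a) \<le> C * \<delta> powr (2 * min \<mu> (1/2) / (2 * min \<mu> (1/2) + 1))))"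
    and Cp: "C > 0" and d0p: "\<delta>0 > 0"
    apply (insert R.real_final)
    apply (elim exE conjE)
    apply (rule that)
    apply assumption+
    done
  have transl: "0 < \<delta> \<and> \<delta> \<le> \<delta>0 \<and> (\<lambda>i. ((\<lambda>i. inner e (v i)) i)\<^sup>2) summable_on I \<and> (\<Sum>\<^sub>\<infinity>i\<in>I. ((\<lambda>i. inner e (v i)) i)\<^sup>2) \<le> \<delta>\<^sup>2 \<and>
        (\<forall>\<alpha>. 0 < \<alpha> \<and> \<alpha> \<le> \<alpha>max \<longrightarrow>
          (\<Sum>\<^sub>\<infinity>i\<in>{i\<in>I. (\<sigma> i)\<^sup>2 \<ge> \<alpha>}. \<alpha> / (\<sigma> i)\<^sup>2 * ((\<lambda>i. inner e (v i)) i)\<^sup>2)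
          \<le> C2 * (\<Sum>\<^sub>\<infinity>i\<in>{i\<in>I. (\<sigma> i)\<^sup>2 \<le> \<alpha>}. (\<sigma> i)\<^sup>2 / \<alpha> * ((\<lambda>i. inner e (v i)) i)\<^sup>2)) \<and>
        a \<in> {0<..<\<alpha>max} \<and>
        (\<forall>\<alpha>\<in>{0<..<\<alpha>max}. sqrt (R.F (\<lambda>i. inner e (v i)) a) / sqrt (R.N (\<lambda>i. inner e (v i)) a) \<le> sqrt (R.F (\<lambda>i. inner e (v i)) \<alpha>) / sqrt (R.N (\<lambda>i. inner e (v i)) \<alpha>))"
    if h: "0 < \<delta> \<and> \<delta> \<le> \<delta>0 \<and> norm e \<le> \<delta> \<and> MC2 C2 I \<sigma> v \<alpha>max e \<and>
        a \<in> {0<..<\<alpha>max} \<and>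
        (\<forall>\<alpha>\<in>{0<..<\<alpha>max}. psiSLR A I \<sigma> v (A xd + e) a \<le> psiSLR A I \<sigma> v (A xd + e) \<alpha>)" for \<delta> e a
  proof -
    from h have dp: "0 < \<delta>" and dd: "\<delta> \<le> \<delta>0" and ne: "norm e \<le> \<delta>" and mc: "MC2 C2 I \<sigma> v \<alpha>max e"
      and a: "a \<in> {0<..<\<alpha>max}"
      and mn: "\<forall>\<alpha>\<in>{0<..<\<alpha>max}. psiSLR A I \<sigma> v (A xd + e) a \<le> psiSLR A I \<sigma> v (A xd + e) \<alpha>" by auto
    have "(\<Sum>\<^sub>\<infinity>i\<in>I. (inner e (v i))\<^sup>2) \<le> \<delta>\<^sup>2"
      using eS[of e] power_mono[OF ne norm_ge_zero, of 2] by linarith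
    moreover have "\<forall>\<alpha>\<in>{0<..<\<alpha>max}. sqrt (R.F (\<lambda>i. inner e (v i)) a) / sqrt (R.N (\<lambda>i. inner e (v i)) a) \<le> sqrt (R.F (\<lambda>i. inner e (v i)) \<alpha>) / sqrt (R.N (\<lambda>i. inner e (v i)) \<alpha>)"
      using mn a by (auto simp: psiSLR_eq)
    ultimately show ?thesis using dp dd es[of e] mc a by (simp add: MC2_def)
  qed
  show ?thesis
  proof (rule exI[of _ C], rule conjI[OF Cp], rule exI[of _ \<delta>0], rule conjI[OF d0p], intro conjI allI impI)
    fix \<delta> e a
    assume h: "0 < \<delta> \<and> \<delta> \<le> \<delta>0 \<and> norm e \<le> \<delta> \<and> MC2 C2 I \<sigma> v \<alpha>max e \<and>
        a \<in> {0<..<\<alpha>max} \<and>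
        (\<forall>\<alpha>\<in>{0<..<\<alpha>max}. psiSLR A I \<sigma> v (A xd + e) a \<le> psiSLR A I \<sigma> v (A xd + e) \<alpha>)"
    have a: "0 < a" using h by simp
    have "sqrt (R.E (\<lambda>i. inner e (v i)) a) \<le> C * \<delta> powr (2 * min \<mu> (1/2) / (2 * min \<mu> (1/2) + 1) * (2 * min \<mu> (1/2)))"
      by (rule RF1[rule_format, OF transl[OF h]])
    thus "norm (tikh A a (A xd + e) - xd) \<le> C * \<delta> powr (2 * min \<mu> (1/2) / (2 * min \<mu> (1/2) + 1) * (2 * min \<mu> (1/2)))"
      using err[OF a] by simp
  next
    fix \<delta> e a
    assume exD: "\<exists>D>0. \<forall>\<alpha>\<in>{0<..<\<alpha>max}.
        (\<Sum>\<^sub>\<infinity>i\<in>{i\<in>I. (\<sigma> i)\<^sup>2 \<le> \<alpha>}. (inner xd (u i))\<^sup>2)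
        \<le> D * (\<Sum>\<^sub>\<infinity>i\<in>{i\<in>I. (\<sigma> i)\<^sup>2 \<ge> \<alpha>}. \<alpha> / (\<sigma> i)\<^sup>2 * (inner xd (u i))\<^sup>2)"
    assume h: "0 < \<delta> \<and> \<delta> \<le> \<delta>0 \<and> norm e \<le> \<delta> \<and> MC2 C2 I \<sigma> v \<alpha>max e \<and>
        a \<in> {0<..<\<alpha>max} \<and>
        (\<forall>\<alpha>\<in>{0<..<\<alpha>max}. psiSLR A I \<sigma> v (A xd + e) a \<le> psiSLR A I \<sigma> v (A xd + e) \<alpha>)"
    have a: "0 < a" using h by simp
    have c1: "(\<Sum>\<^sub>\<infinity>i\<in>{i\<in>I. (\<sigma> i)\<^sup>2 \<le> \<alpha>}. (inner xd (u i))\<^sup>2) = (\<Sum>\<^sub>\<infinity>i\<in>{i\<in>I. (\<sigma> i)\<^sup>2 \<le> \<alpha>}. (R.x i)\<^sup>2)" for \<alpha>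
      by (intro infsum_cong) (simp add: xcoef)
    have c2: "(\<Sum>\<^sub>\<infinity>i\<in>{i\<in>I. (\<sigma> i)\<^sup>2 \<ge> \<alpha>}. \<alpha> / (\<sigma> i)\<^sup>2 * (inner xd (u i))\<^sup>2) = (\<Sum>\<^sub>\<infinity>i\<in>{i\<in>I. (\<sigma> i)\<^sup>2 \<ge> \<alpha>}. \<alpha> / (\<sigma> i)\<^sup>2 * (R.x i)\<^sup>2)" for \<alpha>
      by (intro infsum_cong) (simp add: xcoef)
    have exD': "\<exists>D>0. \<forall>\<alpha>\<in>{0<..<\<alpha>max}.
        (\<Sum>\<^sub>\<infinity>i\<in>{i\<in>I. (\<sigma> i)\<^sup>2 \<le> \<alpha>}. (R.x i)\<^sup>2)
        \<le> D * (\<Sum>\<^sub>\<infinity>i\<in>{i\<in>I. (\<sigma> i)\<^sup>2 \<ge> \<alpha>}. \<alpha> / (\<sigma> i)\<^sup>2 * (R.x i)\<^sup>2)"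
      using exD unfolding c1 c2 .
    have "sqrt (R.E (\<lambda>i. inner e (v i)) a) \<le> C * \<delta> powr (2 * min \<mu> (1/2) / (2 * min \<mu> (1/2) + 1))"
      by (rule RF2[rule_format, OF exD' transl[OF h]])
    thus "norm (tikh A a (A xd + e) - xd) \<le> C * \<delta> powr (2 * min \<mu> (1/2) / (2 * min \<mu> (1/2) + 1))"
      using err[OF a] by simp
  qed
qed

end
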